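(* Consider the robust multi-robot active target tracking problem and the algorithm RATT described in the context. Let $\mathbf{u}_{\mathcal{V},t}$ be the control inputs returned by RATT, let $(\mathcal{A}_s^\star,\mathcal{A}_c^\star)\in\arg\min_{\mathcal{A}_s\subseteq\mathcal{V},\,|\mathcal{A}_s|\le\alpha_s,\ \mathcal{A}_c\subseteq\mathcal{E},\,|\mathcal{A}_c|\le\alpha_c}\Phi(\mathcal{V}\setminus\mathcal{A}_s,\mathcal{E}\setminus\mathcal{A}_c)$ be a worst-case removal for these inputs, and let $\Phi^\star_{\mathcal{V},\alpha_s,\mathcal{E},\alpha_c}$ be the optimal value of the problem. Let $\alpha_{c,s}$ be the number computed by CAA$(N,\alpha_c)$. Then: 1) if $\Phi$ is non-decreasing and (without loss of generality) normalized and non-negative, then $$\frac{\Phi(\mathcal{V}\setminus\mathcal{A}_s^\star,\mathcal{E}\setminus\mathcal{A}_c^\star)}{\Phi^\star_{\mathcal{V},\alpha_s,\mathcal{E},\alpha_c}}\ \ge\ \min\Big[(1-c_\Phi)^3,\ \frac{(1-c_\Phi)^2}{\alpha_{c,s}}\Big];$$ 2) if, additionally, $\Phi$ is submodular, then $$\frac{\Phi(\mathcal{V}\setminus\mathcal{A}_s^\star,\mathcal{E}\setminus\mathcal{A}_c^\star)}{\Phi^\star_{\mathcal{V},\alpha_s,\mathcal{E},\alpha_c}}\ \ge\ \min\Big[\frac{1-k_\Phi}{1+k_\Phi},\ \frac{1-k_\Phi}{\alpha_{c,s}}\Big].$$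
   Context: Setting. There are $N$ robots $\mathcal{V}=\{1,\dots,N\}$; robot $i$ has dynamics $\mathbf{x}_{i,t+1}=f_i(\mathbf{x}_{i,t},\mathbf{u}_{i,t})$ with $\mathbf{u}_{i,t}$ chosen from a finite set $\mathcal{U}_i$; $\mathcal{U}_{\mathcal{V}}=\bigcup_i\mathcal{U}_i$. Robots track targets with noisy sensors and an extended Kalman filter; communication is modeled by the complete graph on $\mathcal{V}$ with edge set $\mathcal{E}$, $|\mathcal{E}|=N(N-1)/2$. For a choice of control inputs, a set $\mathcal{S}\subseteq\mathcal{V}$ of robots whose sensing is not attacked and a set $\mathcal{L}\subseteq\mathcal{E}$ of non-attacked links, the team tracking quality $\Phi(\mathcal{S},\mathcal{L})$ (one step ahead, a function of the filter's posterior covariance) is the maximum, over the connected components $C$ of the graph $(\mathcal{V},\mathcal{L})$, of the tracking quality obtained by fusing the measurements of the robots in $\mathcal{S}\cap C$ (robots with attacked sensing still relay messages). Without communication attacks, $\Phi(\mathcal{W})$ for $\mathcal{W}\subseteq\mathcal{V}$ denotes the quality from fusing the measurements of robots $\mathcal{W}$; $\Phi$ is regarded as a set function on the robots (with their chosen inputs). The problem (given $\alpha_s\le N$, $\alpha_c\le N(N-1)/2$) is $$\max_{\mathbf{u}_{\mathcal{V},t}\in\mathcal{U}_{\mathcal{V}}}\ \min_{\mathcal{A}_s\subseteq\mathcal{V},|\mathcal{A}_s|\le\alpha_s,\ \mathcal{A}_c\subseteq\mathcal{E},|\mathcal{A}_c|\le\alpha_c}\Phi(\mathcal{V}\setminus\mathcal{A}_s,\mathcal{E}\setminus\mathcal{A}_c),$$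 whose optimal value is $\Phi^\star_{\mathcal{V},\alpha_s,\mathcal{E},\alpha_c}$. CAA$(N,\alpha_c)$: set $e_r=N(N-1)/2-\alpha_c$; for $n=1,2,\dots,N$ in increasing order compute $q_n=\lfloor N/n\rfloor$, $r_n=N-nq_n$, $\bar e_n=q_n\frac{n(n-1)}{2}+\frac{r_n(r_n-1)}{2}$, and let $n_{\max}$ be the first $n$ with $e_r\le\bar e_n$; return $\alpha_{c,s}=N-n_{\max}$. RATT: compute $\alpha_{c,s}$ by CAA and set $\alpha=\alpha_s+\alpha_{c,s}$. If $\alpha<N$: for each robot $i$ compute $\max_{\mathbf{u}_i\in\mathcal{U}_i}\Phi(\{i\})$; let $\mathcal{V}_b$ be $\alpha$ robots with the largest such values ("bait" robots), and give each the input attaining its individual maximum; then for the remaining robots run the standard greedy algorithm: starting from $\mathcal{V}_g=\emptyset$, repeatedly pick a not-yet-assigned robot $i'\notin\mathcal{V}_b\cup\mathcal{V}_g$ and an input for it maximizing the marginal gain $\Phi(\mathcal{V}_g\cup\{i'\})-\Phi(\mathcal{V}_g)$, and add $i'$ to $\mathcal{V}_g$, until all robots are assigned. If $\alpha\ge N$: give every robot the input maximizing its individual quality $\Phi(\{i\})$. Set-function notions, for $\phi:2^{\mathcal{X}}\to\mathbb{R}$ on finite $\mathcal{X}$: normalized if $\phi(\emptyset)=0$; non-decreasing if $\mathcal{Y}\subseteq\mathcal{Y}'$ implies $\phi(\mathcal{Y})\le\phi(\mathcal{Y}')$; submodular if $\phi(\mathcal{Y}\cup\{x\})-\phi(\mathcal{Y})\ge\phi(\mathcal{Y}'\cup\{x\})-\phi(\mathcal{Y}')$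 for $\mathcal{Y}\subseteq\mathcal{Y}'$. Curvature (non-decreasing submodular $\phi$ with $\phi(\{x\})\ne0$): $k_\phi=1-\min_{x\in\mathcal{X}}\frac{\phi(\mathcal{X})-\phi(\mathcal{X}\setminus\{x\})}{\phi(\{x\})}$. Total curvature (non-decreasing $\phi$): $c_\phi=1-\min_{x\in\mathcal{X}}\min_{\mathcal{Y},\mathcal{Y}'\subseteq\mathcal{X}\setminus\{x\}}\frac{\phi(\mathcal{Y}\cup\{x\})-\phi(\mathcal{Y})}{\phi(\mathcal{Y}'\cup\{x\})-\phi(\mathcal{Y}')}$. *)

theory Defs
  imports Complex_Main "HOL-Library.FuncSet"
begin

text \<open>The tracking quality
  phi is a set function on robot-input pairs (i, u); fusing the measurements of
  robots W under the input assignment u is phi (sel u W).\<close>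

definition sel :: "(nat \<Rightarrow> 'u) \<Rightarrow> nat set \<Rightarrow> (nat \<times> 'u) set" where
  "sel u W = (\<lambda>i. (i, u i)) ` W"

definition ground :: "nat \<Rightarrow> (nat \<Rightarrow> 'u set) \<Rightarrow> (nat \<times> 'u) set" where
  "ground N U = Sigma {..<N} U"

definition edges :: "nat \<Rightarrow> nat set set" where
  "edges N = {{i, j} | i j. i < N \<and> j < N \<and> i \<noteq> j}"

definition edge_rel :: "nat set set \<Rightarrow> nat rel" where
  "edge_rel L = {(a, b). {a, b} \<in> L}"

definition comp :: "nat set set \<Rightarrow> nat \<Rightarrow> nat set" where
  "comp L i = {j. (i, j) \<in> (edge_rel L)\<^sup>*}"

definition Phi_att ::
  "((nat \<times> 'u) set \<Rightarrow> real) \<Rightarrow> nat \<Rightarrow> (nat \<Rightarrow> 'u) \<Rightarrow> nat set \<Rightarrow> nat set set \<Rightarrow> real" where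
  "Phi_att phi N u S L = Max ((\<lambda>i. phi (sel u (S \<inter> comp L i))) ` {..<N})"

definition feasible_attack :: "nat \<Rightarrow> nat \<Rightarrow> nat \<Rightarrow> nat set \<Rightarrow> nat set set \<Rightarrow> bool" where
  "feasible_attack N as ac As Ac \<longleftrightarrow>
     As \<subseteq> {..<N} \<and> card As \<le> as \<and> Ac \<subseteq> edges N \<and> card Ac \<le> ac"

definition worst ::
  "((nat \<times> 'u) set \<Rightarrow> real) \<Rightarrow> nat \<Rightarrow> nat \<Rightarrow> nat \<Rightarrow> (nat \<Rightarrow> 'u) \<Rightarrow> real" where
  "worst phi N as ac u =
     Min {Phi_att phi N u ({..<N} - As) (edges N - Ac) | As Ac. feasible_attack N as ac As Ac}"

definition opt_value ::
  "((nat \<times> 'u) set \<Rightarrow> real) \<Rightarrow> nat \<Rightarrow> (nat \<Rightarrow> 'u set) \<Rightarrow> nat \<Rightarrow> nat \<Rightarrow> real" where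
  "opt_value phi N U as ac = Max ((\<lambda>u. worst phi N as ac u) ` (PiE {..<N} U))"

definition caa_ebar :: "nat \<Rightarrow> nat \<Rightarrow> nat" where
  "caa_ebar N n = (N div n) * ((n * (n - 1)) div 2) + ((N mod n) * (N mod n - 1)) div 2"

definition caa :: "nat \<Rightarrow> nat \<Rightarrow> nat" where
  "caa N ac = N - (LEAST n. 1 \<le> n \<and> (N * (N - 1)) div 2 - ac \<le> caa_ebar N n)"

text \<open>u is a possible output of RATT (ties broken arbitrarily).\<close>
definition ratt_output ::
  "((nat \<times> 'u) set \<Rightarrow> real) \<Rightarrow> nat \<Rightarrow> (nat \<Rightarrow> 'u set) \<Rightarrow> nat \<Rightarrow> nat \<Rightarrow> (nat \<Rightarrow> 'u) \<Rightarrow> bool" where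
  "ratt_output phi N U as ac u \<longleftrightarrow>
    (let a = as + caa N ac in
     (a < N \<longrightarrow>
       (\<exists>Vb g.
          Vb \<subseteq> {..<N} \<and> card Vb = a \<and>
          (\<forall>i\<in>Vb. u i \<in> U i \<and> (\<forall>v\<in>U i. phi {(i, v)} \<le> phi {(i, u i)})) \<and>
          (\<forall>i\<in>Vb. \<forall>j\<in>{..<N} - Vb. \<forall>v\<in>U j. phi {(j, v)} \<le> phi {(i, u i)}) \<and>
          distinct g \<and> set g = {..<N} - Vb \<and>
          (\<forall>k<length g.
             u (g ! k) \<in> U (g ! k) \<and>
             (\<forall>i'\<in>{..<N} - Vb - set (take k g). \<forall>v\<in>U i'.
                phi (sel u (set (take k g)) \<union> {(i', v)}) - phi (sel u (set (take k g)))
                \<le> phi (sel u (set (take k g)) \<union> {(g ! k, u (g ! k))}) - phi (sel u (set (take k g)))))))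
     \<and> (\<not> a < N \<longrightarrow> (\<forall>i<N. u i \<in> U i \<and> (\<forall>v\<in>U i. phi {(i, v)} \<le> phi {(i, u i)}))))"

definition normalized :: "('a set \<Rightarrow> real) \<Rightarrow> bool" where
  "normalized f \<longleftrightarrow> f {} = 0"

definition nondecreasing_on :: "'a set \<Rightarrow> ('a set \<Rightarrow> real) \<Rightarrow> bool" where
  "nondecreasing_on X f \<longleftrightarrow> (\<forall>A B. A \<subseteq> B \<longrightarrow> B \<subseteq> X \<longrightarrow> f A \<le> f B)"

definition nonneg_on :: "'a set \<Rightarrow> ('a set \<Rightarrow> real) \<Rightarrow> bool" where
  "nonneg_on X f \<longleftrightarrow> (\<forall>A. A \<subseteq> X \<longrightarrow> 0 \<le> f A)"

definition submodular_on :: "'a set \<Rightarrow> ('a set \<Rightarrow> real) \<Rightarrow> bool" where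
  "submodular_on X f \<longleftrightarrow> (\<forall>A B x. A \<subseteq> B \<longrightarrow> B \<subseteq> X \<longrightarrow> x \<in> X \<longrightarrow>
      f (A \<union> {x}) - f A \<ge> f (B \<union> {x}) - f B)"

definition curvature :: "'a set \<Rightarrow> ('a set \<Rightarrow> real) \<Rightarrow> real" where
  "curvature X f = 1 - Min ((\<lambda>x. (f X - f (X - {x})) / f {x}) ` X)"

text \<open>Total curvature; ratios with a zero denominator (= +infinity or undefined) are
  omitted from the minimum.\<close>
definition total_curvature :: "'a set \<Rightarrow> ('a set \<Rightarrow> real) \<Rightarrow> real" where
  "total_curvature X f = 1 - Min {(f (Y \<union> {x}) - f Y) / (f (Y' \<union> {x}) - f Y') | x Y Y'.
      x \<in> X \<and> Y \<subseteq> X - {x} \<and> Y' \<subseteq> X - {x} \<and> f (Y' \<union> {x}) - f Y' \<noteq> 0}"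

end

theory Submission
  imports Defs
begin

lemma mono_onD: "nondecreasing_on X f \<Longrightarrow> A \<subseteq> B \<Longrightarrow> B \<subseteq> X \<Longrightarrow> f A \<le> f B"
  unfolding nondecreasing_on_def by blast

lemma tc_set_finite:
  assumes "finite X"
  shows "finite {(f (Y \<union> {x}) - f Y) / (f (Y' \<union> {x}) - f Y') | x Y Y'.
      x \<in> X \<and> Y \<subseteq> X - {x} \<and> Y' \<subseteq> X - {x} \<and> f (Y' \<union> {x}) - f Y' \<noteq> 0}"
proof -
  have "{(f (Y \<union> {x}) - f Y) / (f (Y' \<union> {x}) - f Y') | x Y Y'.
      x \<in> X \<and> Y \<subseteq> X - {x} \<and> Y' \<subseteq> X - {x} \<and> f (Y' \<union> {x}) - f Y' \<noteq> 0}
    \<subseteq> (\<lambda>(x,Y,Y'). (f (Y \<union> {x}) - f Y) / (f (Y' \<union> {x}) - f Y')) ` (X \<times> Pow X \<times> Pow X)"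
    by (auto simp: image_iff) (metis Diff_subset PowI subset_trans)
  then show ?thesis using assms by (meson finite_Pow_iff finite_SigmaI finite_imageI finite_subset)
qed

lemma tc:
  assumes fin: "finite X" and mono: "nondecreasing_on X f"
    and x: "x \<in> X" and Y: "Y \<subseteq> X - {x}" and Y': "Y' \<subseteq> X - {x}"
  shows "(1 - total_curvature X f) * (f (Y' \<union> {x}) - f Y') \<le> f (Y \<union> {x}) - f Y"
proof (cases "f (Y' \<union> {x}) - f Y' = 0")
  case True
  have "f Y \<le> f (Y \<union> {x})" using mono Y x by (intro mono_onD) auto
  then show ?thesis using True by simp
next
  case False
  let ?S = "{(f (Y \<union> {x}) - f Y) / (f (Y' \<union> {x}) - f Y') | x Y Y'.
      x \<in> X \<and> Y \<subseteq> X - {x} \<and> Y' \<subseteq> X - {x} \<and> f (Y' \<union> {x}) - f Y' \<noteq> 0}"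
  have d: "f Y' \<le> f (Y' \<union> {x})" using mono Y' x by (intro mono_onD) auto
  hence dpos: "f (Y' \<union> {x}) - f Y' > 0" using False by linarith
  have mem: "(f (Y \<union> {x}) - f Y) / (f (Y' \<union> {x}) - f Y') \<in> ?S"
    using x Y Y' False by blast
  have "Min ?S \<le> (f (Y \<union> {x}) - f Y) / (f (Y' \<union> {x}) - f Y')"
    using Min_le[OF tc_set_finite[OF fin] mem] .
  moreover have "1 - total_curvature X f = Min ?S" unfolding total_curvature_def by simp
  ultimately have "(1 - total_curvature X f) \<le> (f (Y \<union> {x}) - f Y) / (f (Y' \<union> {x}) - f Y')" by simp
  then show ?thesis using dpos by (simp add: pos_le_divide_eq mult.commute)
qed

lemma tc_range:
  assumes fin: "finite X" and mono: "nondecreasing_on X f"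
    and ne: "\<exists>x Y'. x \<in> X \<and> Y' \<subseteq> X - {x} \<and> f (Y' \<union> {x}) - f Y' \<noteq> 0"
  shows "0 \<le> 1 - total_curvature X f" "1 - total_curvature X f \<le> 1"
proof -
  let ?S = "{(f (Y \<union> {x}) - f Y) / (f (Y' \<union> {x}) - f Y') | x Y Y'.
      x \<in> X \<and> Y \<subseteq> X - {x} \<and> Y' \<subseteq> X - {x} \<and> f (Y' \<union> {x}) - f Y' \<noteq> 0}"
  have eq: "1 - total_curvature X f = Min ?S" unfolding total_curvature_def by simp
  obtain x Y' where xy: "x \<in> X" "Y' \<subseteq> X - {x}" "f (Y' \<union> {x}) - f Y' \<noteq> 0" using ne by blast
  have "(f (Y' \<union> {x}) - f Y') / (f (Y' \<union> {x}) - f Y') \<in> ?S" using xy by blast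
  hence "1 \<in> ?S" using xy(3) by simp
  hence "Min ?S \<le> 1" using Min_le[OF tc_set_finite[OF fin]] by blast
  thus "1 - total_curvature X f \<le> 1" using eq by simp
  have "?S \<noteq> {}" using \<open>1 \<in> ?S\<close> by blast
  moreover have "\<forall>s\<in>?S. 0 \<le> s"
  proof
    fix s assume "s \<in> ?S"
    then obtain x Y Y' where s: "s = (f (Y \<union> {x}) - f Y) / (f (Y' \<union> {x}) - f Y')"
      "x \<in> X" "Y \<subseteq> X - {x}" "Y' \<subseteq> X - {x}" by blast
    have "f Y \<le> f (Y \<union> {x})" using mono s by (intro mono_onD) auto
    moreover have "f Y' \<le> f (Y' \<union> {x})" using mono s by (intro mono_onD) auto
    ultimately show "0 \<le> s" using s(1) by simp
  qed
  ultimately have "0 \<le> Min ?S" using Min_ge_iff[OF tc_set_finite[OF fin]] by blast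
  thus "0 \<le> 1 - total_curvature X f" using eq by simp
qed

lemma acc_lower:
  fixes f :: "'a set \<Rightarrow> real"
  assumes fin: "finite S" and Q: "\<And>x Y. x \<in> X \<Longrightarrow> Y \<subseteq> X - {x} \<Longrightarrow> k * f {x} \<le> f (Y \<union> {x}) - f Y"
    and sub: "S \<union> T \<subseteq> X" and dis: "S \<inter> T = {}"
  shows "k * (\<Sum>x\<in>S. f {x}) \<le> f (T \<union> S) - f T"
  using fin sub dis
proof (induction S rule: finite_induct)
  case empty then show ?case by simp
next
  case (insert x S)
  have "k * f {x} \<le> f ((T \<union> S) \<union> {x}) - f (T \<union> S)"
    using insert by (intro Q) auto
  moreover have "k * (\<Sum>x\<in>S. f {x}) \<le> f (T \<union> S) - f T" using insert by auto
  ultimately show ?case using insert by (simp add: algebra_simps)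
qed

lemma acc_upper:
  fixes f :: "'a set \<Rightarrow> real"
  assumes fin: "finite S" and R: "\<And>x Y. x \<in> X \<Longrightarrow> Y \<subseteq> X - {x} \<Longrightarrow> c * (f (Y \<union> {x}) - f Y) \<le> f {x}"
    and sub: "S \<union> T \<subseteq> X" and dis: "S \<inter> T = {}"
  shows "c * (f (T \<union> S) - f T) \<le> (\<Sum>x\<in>S. f {x})"
  using fin sub dis
proof (induction S rule: finite_induct)
  case empty then show ?case by simp
next
  case (insert x S)
  have "c * (f ((T \<union> S) \<union> {x}) - f (T \<union> S)) \<le> f {x}"
    using insert by (intro R) auto
  moreover have "c * (f (T \<union> S) - f T) \<le> (\<Sum>x\<in>S. f {x})" using insert by auto
  ultimately show ?case using insert by (simp add: algebra_simps)
qed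

lemma acc_tc:
  fixes f :: "'a set \<Rightarrow> real"
  assumes fin: "finite S" and P: "\<And>x Y Y'. x \<in> X \<Longrightarrow> Y \<subseteq> X - {x} \<Longrightarrow> Y' \<subseteq> X - {x} \<Longrightarrow>
       c * (f (Y' \<union> {x}) - f Y') \<le> f (Y \<union> {x}) - f Y"
    and sub: "S \<union> T \<subseteq> X" and dis: "S \<inter> T = {}" and norm: "f {} = 0"
  shows "c * f S \<le> f (T \<union> S) - f T"
  using fin sub dis
proof (induction S rule: finite_induct)
  case empty then show ?case using norm by simp
next
  case (insert x S)
  have "c * (f (S \<union> {x}) - f S) \<le> f ((T \<union> S) \<union> {x}) - f (T \<union> S)"
    using insert by (intro P) auto
  moreover have "c * f S \<le> f (T \<union> S) - f T" using insert by auto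
  ultimately show ?case using insert by (simp add: algebra_simps)
qed

definition H :: "nat \<Rightarrow> nat" where "H x = x * (x - 1)"
definition E2 :: "nat \<Rightarrow> nat \<Rightarrow> nat" where "E2 n M = (M div n) * H n + H (M mod n)"

lemma H_int: "int (H x) = int x * (int x - 1)"
  unfolding H_def by (cases x) (auto simp: algebra_simps)

lemma H_super: "H s + H r \<le> H (s + r)"
proof -
  have "int (H s) + int (H r) \<le> int (H (s + r))"
    unfolding H_int by (simp add: algebra_simps)
  thus ?thesis by linarith
qed

lemma H_exch: assumes "s \<le> n" "r \<le> n" "n \<le> s + r" shows "H s + H r \<le> H n + H (s + r - n)"
proof -
  have e: "int (s + r - n) = int s + int r - int n" using assms by simp
  have "0 \<le> (int n - int s) * (int n - int r)" using assms by simp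
  hence "int (H s) + int (H r) \<le> int (H n) + int (H (s + r - n))"
    unfolding H_int e by (simp add: algebra_simps)
  thus ?thesis by linarith
qed

lemma E2_step:
  assumes "s \<le> n" "0 < n"
  shows "H s + E2 n M \<le> E2 n (s + M)"
proof -
  define q r where "q = M div n" and "r = M mod n"
  have M: "M = r + q * n" unfolding q_def r_def by simp
  have rn: "r < n" unfolding r_def using assms by simp
  have d: "(s + M) div n = (s + r) div n + q" "(s + M) mod n = (s + r) mod n"
    unfolding M using assms by (simp_all add: add.assoc[symmetric])
  show ?thesis
  proof (cases "s + r < n")
    case True
    then show ?thesis unfolding E2_def d using H_super[of s r] by (simp add: q_def[symmetric] r_def[symmetric])
  next
    case False
    have "(s + r) div n = Suc ((s + r - n) div n)" using False assms by (intro le_div_geq) auto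
    moreover have "(s + r - n) div n = 0" using assms rn by simp
    ultimately have d1: "(s + r) div n = 1" by simp
    have d2: "(s + r) mod n = s + r - n" using False assms rn by (simp add: le_mod_geq)
    show ?thesis unfolding E2_def d d1 d2 using H_exch[of s n r] assms rn False
      by (simp add: q_def[symmetric] r_def[symmetric] algebra_simps)
  qed
qed

lemma E2_family:
  assumes "finite Cs" "\<And>C. C \<in> Cs \<Longrightarrow> s C \<le> n" "0 < n"
  shows "(\<Sum>C\<in>Cs. H (s C)) \<le> E2 n (\<Sum>C\<in>Cs. s C)"
  using assms
proof (induction Cs rule: finite_induct)
  case empty then show ?case by (simp add: E2_def H_def)
next
  case (insert C Cs)
  have "H (s C) + E2 n (\<Sum>C\<in>Cs. s C) \<le> E2 n (s C + (\<Sum>C\<in>Cs. s C))"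
    using insert by (intro E2_step) auto
  then show ?case using insert by simp
qed

lemma E2_le_H: "0 < n \<Longrightarrow> E2 n M \<le> H M"
proof -
  assume n: "0 < n"
  have "q * H n + H r \<le> H (q * n + r)" for q r
  proof (induction q)
    case 0 then show ?case by simp
  next
    case (Suc q)
    have "H n + H (q * n + r) \<le> H (n + (q * n + r))" by (rule H_super)
    then show ?case using Suc by (simp add: add.assoc)
  qed
  from this[of "M div n" "M mod n"] show ?thesis unfolding E2_def by simp
qed

lemma E2_shift: "0 < n \<Longrightarrow> n \<le> N \<Longrightarrow> E2 n N = H n + E2 n (N - n)"
  unfolding E2_def by (simp add: le_div_geq le_mod_geq)

lemma H_split: "n \<le> N \<Longrightarrow> H N = H n + H (N - n) + 2 * n * (N - n)"
proof -
  assume a: "n \<le> N"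
  have e: "int (N - n) = int N - int n" using a by simp
  have "int (H N) = int (H n) + int (H (N - n)) + 2 * int n * (int N - int n)"
    unfolding H_int e by (simp add: algebra_simps)
  also have "\<dots> = int (H n + H (N - n) + 2 * n * (N - n))" using e by simp
  finally show ?thesis by (simp only: of_nat_eq_iff)
qed

lemma ebar_E2: "caa_ebar N n = E2 n N div 2"
proof -
  have ev: "even (H x)" for x unfolding H_def by (cases x) auto
  have "caa_ebar N n = (N div n) * (H n div 2) + H (N mod n) div 2"
    unfolding caa_ebar_def H_def by simp
  also have "\<dots> = E2 n N div 2" unfolding E2_def using ev[of n] ev[of "N mod n"]
    by (auto elim!: evenE)
  finally show ?thesis .
qed

lemma H_choose: "2 * (x choose 2) = H x"
proof -
  have "even (x * (x - 1))" by (cases x) auto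
  thus ?thesis unfolding H_def choose_two by simp
qed

lemma edges_eq: "edges N = {B. B \<subseteq> {..<N} \<and> card B = 2}"
  unfolding edges_def by (auto simp: card_2_iff)

lemma card_edges: "card (edges N) = N * (N - 1) div 2"
  unfolding edges_eq by (simp add: n_subsets choose_two)

lemma finite_edges: "finite (edges N)"
  unfolding edges_eq by simp

lemma comp_self: "i \<in> comp L i"
  unfolding comp_def by simp

lemma edge_rel_sym: "(a, b) \<in> edge_rel L \<Longrightarrow> (b, a) \<in> edge_rel L"
  unfolding edge_rel_def by (simp add: insert_commute)

lemma rtrancl_sym: "(a, b) \<in> (edge_rel L)\<^sup>* \<Longrightarrow> (b, a) \<in> (edge_rel L)\<^sup>*"
proof (induction rule: rtrancl_induct)
  case base then show ?case by simp
next
  case (step y z)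
  then show ?case by (meson converse_rtrancl_into_rtrancl edge_rel_sym)
qed

lemma comp_eq: "j \<in> comp L i \<Longrightarrow> comp L j = comp L i"
proof -
  assume "j \<in> comp L i"
  hence ij: "(i, j) \<in> (edge_rel L)\<^sup>*" unfolding comp_def by simp
  hence ji: "(j, i) \<in> (edge_rel L)\<^sup>*" by (rule rtrancl_sym)
  show ?thesis
  proof
    show "comp L j \<subseteq> comp L i" unfolding comp_def using ij by (auto intro: rtrancl_trans)
    show "comp L i \<subseteq> comp L j" unfolding comp_def using ji by (auto intro: rtrancl_trans)
  qed
qed

lemma comp_disj: "comp L i \<noteq> comp L j \<Longrightarrow> comp L i \<inter> comp L j = {}"
proof (rule ccontr)
  assume "comp L i \<noteq> comp L j" "comp L i \<inter> comp L j \<noteq> {}"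
  then obtain x where "x \<in> comp L i" "x \<in> comp L j" by blast
  hence "comp L x = comp L i" "comp L x = comp L j" using comp_eq by metis+
  thus False using \<open>comp L i \<noteq> comp L j\<close> by simp
qed

lemma comp_inv:
  assumes "\<And>a b. {a, b} \<in> L \<Longrightarrow> P a \<Longrightarrow> P b" "P i"
  shows "comp L i \<subseteq> {j. P j}"
proof
  fix j assume "j \<in> comp L i"
  hence "(i, j) \<in> (edge_rel L)\<^sup>*" unfolding comp_def by simp
  thus "j \<in> {j. P j}"
    by (induction rule: rtrancl_induct) (use assms in \<open>auto simp: edge_rel_def\<close>)
qed

lemma comp_sub:
  assumes "L \<subseteq> edges N" "i < N"
  shows "comp L i \<subseteq> {..<N}"
proof -
  have "comp L i \<subseteq> {j. j < N}"
  proof (rule comp_inv)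
    fix a b assume "{a, b} \<in> L" "a < N"
    hence "{a,b} \<in> edges N" using assms by auto
    then obtain x y where "{a,b} = {x,y}" "x < N" "y < N" unfolding edges_def by auto
    thus "b < N" by (metis doubleton_eq_iff)
  qed (use assms in auto)
  thus ?thesis by auto
qed

lemma edge_in_comp: "{a, b} \<in> L \<Longrightarrow> {a, b} \<subseteq> comp L a"
  unfolding comp_def edge_rel_def by auto

lemma count_edges:
  assumes L: "L \<subseteq> edges N" and n: "0 < n" and small: "\<And>i. i < N \<Longrightarrow> card (comp L i) \<le> n"
  shows "card L \<le> caa_ebar N n"
proof -
  define Cs where "Cs = comp L ` {..<N}"
  have finCs: "finite Cs" unfolding Cs_def by simp
  have Csub: "C \<subseteq> {..<N}" if "C \<in> Cs" for C using that comp_sub[OF L] unfolding Cs_def by auto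
  have finC: "finite C" if "C \<in> Cs" for C using Csub[OF that] finite_subset by blast
  have "L \<subseteq> (\<Union>C\<in>Cs. {B. B \<subseteq> C \<and> card B = 2})"
  proof
    fix e assume e: "e \<in> L"
    then obtain a b where ab: "e = {a,b}" "a < N" "b < N" "a \<noteq> b" using L unfolding edges_def by auto
    have "e \<subseteq> comp L a" using edge_in_comp e ab by auto
    moreover have "card e = 2" using ab by simp
    ultimately show "e \<in> (\<Union>C\<in>Cs. {B. B \<subseteq> C \<and> card B = 2})" unfolding Cs_def using ab by auto
  qed
  hence "card L \<le> card (\<Union>C\<in>Cs. {B. B \<subseteq> C \<and> card B = 2})"
    using finCs finC by (intro card_mono) auto
  also have "\<dots> \<le> (\<Sum>C\<in>Cs. card {B. B \<subseteq> C \<and> card B = 2})"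
    by (rule card_UN_le[OF finCs])
  also have "\<dots> = (\<Sum>C\<in>Cs. card C choose 2)"
    using finC by (intro sum.cong) (auto simp: n_subsets)
  finally have "2 * card L \<le> 2 * (\<Sum>C\<in>Cs. card C choose 2)" by simp
  also have "\<dots> = (\<Sum>C\<in>Cs. H (card C))"
    by (simp add: sum_distrib_left H_choose)
  also have "\<dots> \<le> E2 n (\<Sum>C\<in>Cs. card C)"
    using finCs n small unfolding Cs_def by (intro E2_family) auto
  also have "(\<Sum>C\<in>Cs. card C) = card (\<Union>Cs)"
  proof (rule card_Union_disjoint[symmetric])
    show "pairwise disjnt Cs" unfolding Cs_def pairwise_def disjnt_def using comp_disj by blast
  qed (use finC in auto)
  also have "\<Union>Cs = {..<N}" using Csub comp_self unfolding Cs_def by blast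
  finally have "2 * card L \<le> E2 n N" by simp
  thus ?thesis unfolding ebar_E2 by simp
qed

lemma caa_least:
  fixes N ac :: nat
  defines "nm \<equiv> (LEAST n. 1 \<le> n \<and> (N * (N - 1)) div 2 - ac \<le> caa_ebar N n)"
  assumes N: "1 \<le> N"
  shows "1 \<le> nm" "nm \<le> N" "(N * (N - 1)) div 2 - ac \<le> caa_ebar N nm"
    "\<And>m. 1 \<le> m \<Longrightarrow> m < nm \<Longrightarrow> caa_ebar N m < (N * (N - 1)) div 2 - ac"
    "caa N ac = N - nm"
proof -
  let ?P = "\<lambda>n. 1 \<le> n \<and> (N * (N - 1)) div 2 - ac \<le> caa_ebar N n"
  have PN: "?P N"
  proof -
    have e: "E2 N N = H N" unfolding E2_def using N by (simp add: H_def)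
    have "caa_ebar N N = N * (N - 1) div 2" unfolding ebar_E2 e H_def ..
    thus ?thesis using N by simp
  qed
  have P: "?P nm" unfolding nm_def by (rule LeastI[of ?P, OF PN])
  thus "1 \<le> nm" "(N * (N - 1)) div 2 - ac \<le> caa_ebar N nm" by simp_all
  show "nm \<le> N" unfolding nm_def by (rule Least_le[of ?P, OF PN])
  show "\<And>m. 1 \<le> m \<Longrightarrow> m < nm \<Longrightarrow> caa_ebar N m < (N * (N - 1)) div 2 - ac"
  proof -
    fix m assume m: "1 \<le> m" "m < nm"
    have "\<not> ?P m" using not_less_Least[of m ?P] m(2) unfolding nm_def by blast
    thus "caa_ebar N m < (N * (N - 1)) div 2 - ac" using m(1) by simp
  qed
  show "caa N ac = N - nm" unfolding caa_def nm_def by simp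
qed

lemma big_comp:
  assumes N: "1 \<le> N" and L: "L \<subseteq> edges N"
    and cardL: "(N * (N - 1)) div 2 - ac \<le> card L"
  shows "\<exists>i<N. N - caa N ac \<le> card (comp L i)"
proof -
  define nm where "nm = (LEAST n. 1 \<le> n \<and> (N * (N - 1)) div 2 - ac \<le> caa_ebar N n)"
  note cl = caa_least[where N=N and ac=ac, folded nm_def, OF N]
  have nmle: "N - caa N ac = nm" using cl by simp
  show ?thesis
  proof (cases "nm = 1")
    case True
    have fc: "finite (comp L 0)" using comp_sub[OF L, of 0] N finite_subset by auto
    have "0 \<in> comp L 0" by (rule comp_self)
    hence "card (comp L 0) \<noteq> 0" using fc by auto
    hence "1 \<le> card (comp L 0)" by simp
    thus ?thesis using N True nmle by (intro exI[of _ 0]) auto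
  next
    case False
    hence m: "1 \<le> nm - 1" "nm - 1 < nm" using cl by auto
    have lt: "caa_ebar N (nm - 1) < (N * (N - 1)) div 2 - ac" using cl(4)[OF m] .
    show ?thesis
    proof (rule ccontr)
      assume "\<not> ?thesis"
      hence "\<And>i. i < N \<Longrightarrow> card (comp L i) \<le> nm - 1" using nmle by auto
      hence "card L \<le> caa_ebar N (nm - 1)" using m by (intro count_edges[OF L]) auto
      thus False using lt cardL by simp
    qed
  qed
qed

lemma cut_budget:
  assumes N: "1 \<le> N" and ac: "ac \<le> N * (N - 1) div 2"
  shows "(N - caa N ac) * caa N ac \<le> ac"
proof -
  define nm where "nm = (LEAST n. 1 \<le> n \<and> (N * (N - 1)) div 2 - ac \<le> caa_ebar N n)"
  note cl = caa_least[where N=N and ac=ac, folded nm_def, OF N]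
  have a: "caa N ac = N - nm" "N - caa N ac = nm" using cl by auto
  have "E2 nm N = H nm + E2 nm (N - nm)" using cl by (intro E2_shift) auto
  also have "\<dots> \<le> H nm + H (N - nm)" using E2_le_H[of nm "N - nm"] cl by simp
  finally have "E2 nm N + 2 * nm * (N - nm) \<le> H N" using H_split[of nm N] cl by simp
  hence "2 * (caa_ebar N nm + nm * (N - nm)) \<le> H N" unfolding ebar_E2 by simp
  hence "caa_ebar N nm + nm * (N - nm) \<le> N * (N - 1) div 2" unfolding H_def by simp
  hence "nm * (N - nm) \<le> ac" using cl(3) ac by linarith
  thus ?thesis using a by simp
qed

lemma sel_insert: "sel u (insert i K) = insert (i, u i) (sel u K)"
  unfolding sel_def by simp
lemma sel_empty[simp]: "sel u {} = {}"
  unfolding sel_def by simp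
lemma sel_Un: "sel u (A \<union> B) = sel u A \<union> sel u B"
  unfolding sel_def by auto
lemma mem_sel: "(i, v) \<in> sel u K \<longleftrightarrow> i \<in> K \<and> v = u i"
  unfolding sel_def by auto
lemma sel_mono: "A \<subseteq> B \<Longrightarrow> sel u A \<subseteq> sel u B"
  unfolding sel_def by auto
lemma finite_sel: "finite K \<Longrightarrow> finite (sel u K)"
  unfolding sel_def by simp
lemma sel_disj: "A \<inter> B = {} \<Longrightarrow> sel u A \<inter> sel u' B = {}"
  unfolding sel_def by auto
lemma sel_ground: "K \<subseteq> {..<N} \<Longrightarrow> (\<And>i. i \<in> K \<Longrightarrow> u i \<in> U i) \<Longrightarrow> sel u K \<subseteq> ground N U"
  unfolding sel_def ground_def by auto
lemma sum_sel: "(\<Sum>x\<in>sel u K. h x) = (\<Sum>i\<in>K. h (i, u i))"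
  unfolding sel_def by (subst sum.reindex) (auto simp: inj_on_def)
lemma finite_ground: "(\<And>i. i < N \<Longrightarrow> finite (U i)) \<Longrightarrow> finite (ground N U)"
  unfolding ground_def by auto

lemma take_Suc_set: "k < length g \<Longrightarrow> set (take (Suc k) g) = insert (g ! k) (set (take k g))"
  by (simp add: take_Suc_conv_app_nth)
lemma nth_notin_take: "distinct g \<Longrightarrow> k < length g \<Longrightarrow> g ! k \<notin> set (take k g)"
  by (metis distinct_take id_take_nth_drop not_distinct_conv_prefix take_Suc_conv_app_nth)

locale gsetup =
  fixes f :: "(nat \<times> 'u) set \<Rightarrow> real" and N :: nat and U :: "nat \<Rightarrow> 'u set"
    and u :: "nat \<Rightarrow> 'u" and Vb :: "nat set" and g :: "nat list"
  assumes Ufin: "\<And>i. i < N \<Longrightarrow> finite (U i)"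
    and mono: "nondecreasing_on (ground N U) f" and norm: "f {} = 0"
    and uU: "\<And>i. i < N \<Longrightarrow> u i \<in> U i"
    and Vb: "Vb \<subseteq> {..<N}"
    and dist: "distinct g" and setg: "set g = {..<N} - Vb"
    and greedy: "\<And>k i' v. k < length g \<Longrightarrow> i' \<in> {..<N} - Vb - set (take k g) \<Longrightarrow> v \<in> U i' \<Longrightarrow>
        f (sel u (set (take k g)) \<union> {(i', v)}) - f (sel u (set (take k g)))
        \<le> f (sel u (set (take k g)) \<union> {(g ! k, u (g ! k))}) - f (sel u (set (take k g)))"
begin

abbreviation "X \<equiv> ground N U"

lemma finX: "finite X" using finite_ground Ufin by blast

lemma gk: "k < length g \<Longrightarrow> g ! k < N \<and> g ! k \<notin> Vb \<and> g ! k \<notin> set (take k g)"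
  using nth_mem[of k g] setg nth_notin_take[OF dist] by auto

lemma take_sub: "set (take k g) \<subseteq> {..<N}"
  using setg set_take_subset[of k g] by auto

lemma selX: "K \<subseteq> {..<N} \<Longrightarrow> (\<And>i. i < N \<Longrightarrow> u' i \<in> U i) \<Longrightarrow> sel u' K \<subseteq> X"
  by (rule sel_ground) auto

lemma greedy1:
  fixes c :: real
  assumes P: "\<And>x Y Y'. x \<in> X \<Longrightarrow> Y \<subseteq> X - {x} \<Longrightarrow> Y' \<subseteq> X - {x} \<Longrightarrow>
       c * (f (Y' \<union> {x}) - f Y') \<le> f (Y \<union> {x}) - f Y"
    and c0: "0 \<le> c" and u': "\<And>i. i < N \<Longrightarrow> u' i \<in> U i" and K: "K \<subseteq> set g"
  shows "c^2 * f (sel u' K) \<le> f (sel u K)"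
proof -
  have "k \<le> length g \<Longrightarrow> c^2 * f (sel u' (K \<inter> set (take k g))) \<le> f (sel u (K \<inter> set (take k g)))" for k
  proof (induction k)
    case 0 then show ?case using norm by simp
  next
    case (Suc k)
    hence k: "k < length g" by simp
    define j where "j = g ! k"
    have j: "j < N" "j \<notin> Vb" "j \<notin> set (take k g)" using gk[OF k] unfolding j_def by auto
    have PS: "set (take (Suc k) g) = insert j (set (take k g))" using take_Suc_set[OF k] j_def by simp
    show ?case
    proof (cases "j \<in> K")
      case False
      hence "K \<inter> set (take (Suc k) g) = K \<inter> set (take k g)" using PS by auto
      then show ?thesis using Suc k by simp
    next
      case True
      hence KS: "K \<inter> set (take (Suc k) g) = insert j (K \<inter> set (take k g))" using PS by auto
      define A' where "A' = sel u' (K \<inter> set (take k g))"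
      define A where "A = sel u (K \<inter> set (take k g))"
      define Gk where "Gk = sel u (set (take k g))"
      define w where "w = (j, u' j)"
      define x where "x = (j, u j)"
      have wX: "w \<in> X" and xX: "x \<in> X" unfolding w_def x_def ground_def using j u' uU by auto
      have subs: "K \<inter> set (take k g) \<subseteq> {..<N}" "set (take k g) \<subseteq> {..<N}" using take_sub by auto
      have A'X: "A' \<subseteq> X - {w}" unfolding A'_def w_def using selX[OF subs(1) u'] j by (auto simp: mem_sel)
      have AX: "A \<subseteq> X - {x}" unfolding A_def x_def using selX[OF subs(1) uU] j by (auto simp: mem_sel)
      have GX1: "Gk \<subseteq> X - {w}" unfolding Gk_def w_def using selX[OF subs(2) uU] j by (auto simp: mem_sel)
      have GX2: "Gk \<subseteq> X - {x}" unfolding Gk_def x_def using selX[OF subs(2) uU] j by (auto simp: mem_sel)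
      have s1: "c * (f (A' \<union> {w}) - f A') \<le> f (Gk \<union> {w}) - f Gk" by (rule P[OF wX GX1 A'X])
      have s2: "f (Gk \<union> {w}) - f Gk \<le> f (Gk \<union> {x}) - f Gk"
        unfolding Gk_def w_def x_def j_def using greedy[OF k, of j "u' j"] j u' unfolding j_def by auto
      have s3: "c * (f (Gk \<union> {x}) - f Gk) \<le> f (A \<union> {x}) - f A" by (rule P[OF xX AX GX2])
      have "c^2 * (f (A' \<union> {w}) - f A') \<le> c * (f (Gk \<union> {w}) - f Gk)"
        using mult_left_mono[OF s1 c0] by (simp add: power2_eq_square mult.assoc)
      also have "\<dots> \<le> c * (f (Gk \<union> {x}) - f Gk)" using mult_left_mono[OF s2 c0] .
      also have "\<dots> \<le> f (A \<union> {x}) - f A" by (rule s3)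
      finally have "c^2 * (f (A' \<union> {w}) - f A') \<le> f (A \<union> {x}) - f A" .
      moreover have "c^2 * f A' \<le> f A" using Suc k unfolding A'_def A_def by simp
      ultimately have "c^2 * f (A' \<union> {w}) \<le> f (A \<union> {x})" by (simp add: algebra_simps)
      moreover have "A' \<union> {w} = sel u' (K \<inter> set (take (Suc k) g))" unfolding KS A'_def w_def sel_insert by simp
      moreover have "A \<union> {x} = sel u (K \<inter> set (take (Suc k) g))" unfolding KS A_def x_def sel_insert by simp
      ultimately show ?thesis by simp
    qed
  qed
  from this[of "length g"] show ?thesis using K by (simp add: Int_absorb2)
qed


lemma greedy2:
  fixes kap :: real
  assumes sub: "submodular_on X f"
    and Q: "\<And>x Y. x \<in> X \<Longrightarrow> Y \<subseteq> X - {x} \<Longrightarrow> kap * f {x} \<le> f (Y \<union> {x}) - f Y"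
    and k0: "0 \<le> kap" and k1: "kap \<le> 1" and u': "\<And>i. i < N \<Longrightarrow> u' i \<in> U i"
  shows "f (sel u' (set g)) \<le> (2 - kap) * f (sel u (set g))"
proof -
  define P where "P k = set (take k g)" for k
  define Gs where "Gs k = sel u (P k)" for k
  define d where "d t = f (Gs t \<union> {(g ! t, u (g ! t))}) - f (Gs t)" for t
  define S where "S k = (\<Sum>t<k. if u' (g ! t) \<noteq> u (g ! t) then d t else 0)" for k
  define G where "G = sel u (set g)"
  define W where "W = sel u' (set g)"
  have Psub: "P k \<subseteq> {..<N}" for k unfolding P_def using take_sub by auto
  have GX: "G \<subseteq> X" unfolding G_def using selX uU setg by auto
  have WX: "W \<subseteq> X" unfolding W_def using selX u' setg by auto
  have GsX: "Gs k \<subseteq> X" for k unfolding Gs_def using selX[OF Psub uU] .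
  have PSuc: "k < length g \<Longrightarrow> P (Suc k) = insert (g ! k) (P k)" for k unfolding P_def by (rule take_Suc_set)
  have Pg: "P (length g) = set g" unfolding P_def by simp
  have PG: "P k \<subseteq> set g" for k unfolding P_def by (rule set_take_subset)
  have dnn: "0 \<le> d t" if "t < length g" for t
  proof -
    have "(g!t, u (g!t)) \<in> X" unfolding ground_def using gk[OF that] uU by auto
    thus ?thesis unfolding d_def using mono GsX[of t] by (intro diff_ge_0_iff_ge[THEN iffD2] mono_onD) auto
  qed
  have subm: "A \<subseteq> B \<Longrightarrow> B \<subseteq> X \<Longrightarrow> y \<in> X \<Longrightarrow> f (B \<union> {y}) - f B \<le> f (A \<union> {y}) - f A" for A B y
    using sub unfolding submodular_on_def by blast
  have a: "k \<le> length g \<Longrightarrow> f (G \<union> sel u' (P k)) \<le> f G + S k" for k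
  proof (induction k)
    case 0 then show ?case unfolding P_def S_def by simp
  next
    case (Suc k)
    hence k: "k < length g" by simp
    define j where "j = g ! k"
    have j: "j < N" "j \<notin> Vb" "j \<notin> P k" using gk[OF k] unfolding j_def P_def by auto
    have jg: "j \<in> set g" using j setg by auto
    have set: "G \<union> sel u' (P (Suc k)) = G \<union> sel u' (P k) \<union> {(j, u' j)}"
      unfolding PSuc[OF k] j_def sel_insert by auto
    show ?case
    proof (cases "u' j = u j")
      case True
      have "(j, u' j) \<in> G" unfolding G_def using True jg by (simp add: mem_sel)
      hence "G \<union> sel u' (P (Suc k)) = G \<union> sel u' (P k)" unfolding set by auto
      moreover have "S (Suc k) = S k" unfolding S_def using True j_def by simp
      ultimately show ?thesis using Suc k by simp
    next
      case False
      have B: "G \<union> sel u' (P k) \<subseteq> X" using GX selX[OF Psub u'] by auto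
      have wX: "(j, u' j) \<in> X" unfolding ground_def using j u' by auto
      have AB: "Gs k \<subseteq> G \<union> sel u' (P k)" unfolding Gs_def G_def using sel_mono[OF PG] by auto
      have "f (G \<union> sel u' (P k) \<union> {(j, u' j)}) - f (G \<union> sel u' (P k)) \<le> f (Gs k \<union> {(j, u' j)}) - f (Gs k)"
        by (rule subm[OF AB B wX])
      also have "\<dots> \<le> d k" unfolding d_def Gs_def P_def j_def
        using greedy[OF k, of j "u' j"] j u' unfolding j_def P_def by auto
      finally have "f (G \<union> sel u' (P (Suc k))) \<le> f (G \<union> sel u' (P k)) + d k" unfolding set by simp
      moreover have "S (Suc k) = S k + d k" unfolding S_def using False j_def by simp
      ultimately show ?thesis using Suc k by simp
    qed
  qed
  have b: "k \<le> length g \<Longrightarrow> f W + kap * S k \<le> f (W \<union> Gs k)" for k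
  proof (induction k)
    case 0 then show ?case unfolding P_def S_def Gs_def by simp
  next
    case (Suc k)
    hence k: "k < length g" by simp
    define j where "j = g ! k"
    have j: "j < N" "j \<notin> Vb" "j \<notin> P k" using gk[OF k] unfolding j_def P_def by auto
    have jg: "j \<in> set g" using j setg by auto
    have set: "W \<union> Gs (Suc k) = W \<union> Gs k \<union> {(j, u j)}"
      unfolding Gs_def PSuc[OF k] j_def sel_insert by auto
    show ?case
    proof (cases "u' j = u j")
      case True
      have "(j, u j) \<in> W" unfolding W_def using True jg by (simp add: mem_sel)
      hence "W \<union> Gs (Suc k) = W \<union> Gs k" unfolding set by auto
      moreover have "S (Suc k) = S k" unfolding S_def using True j_def by simp
      ultimately show ?thesis using Suc k by simp
    next
      case False
      have xX: "(j, u j) \<in> X" unfolding ground_def using j uU by auto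
      have notin: "(j, u j) \<notin> W \<union> Gs k" unfolding W_def Gs_def using False j by (auto simp: mem_sel)
      have "kap * f {(j, u j)} \<le> f (W \<union> Gs k \<union> {(j, u j)}) - f (W \<union> Gs k)"
      proof -
        have "W \<union> Gs k \<subseteq> X - {(j, u j)}" using notin WX GsX[of k] by auto
        thus ?thesis by (rule Q[OF xX])
      qed
      moreover have "d k \<le> f {(j, u j)}"
        using subm[of "{}" "Gs k" "(j, u j)"] GsX[of k] xX norm unfolding d_def j_def by simp
      ultimately have "kap * d k \<le> f (W \<union> Gs (Suc k)) - f (W \<union> Gs k)"
        unfolding set using mult_left_mono[OF _ k0] by (meson order_trans)
      moreover have "S (Suc k) = S k + d k" unfolding S_def using False j_def by simp
      ultimately show ?thesis using Suc k by (simp add: algebra_simps)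
    qed
  qed
  have c: "k \<le> length g \<Longrightarrow> f (Gs k) = (\<Sum>t<k. d t)" for k
  proof (induction k)
    case 0 then show ?case unfolding Gs_def P_def using norm by simp
  next
    case (Suc k)
    hence k: "k < length g" by simp
    have "Gs (Suc k) = Gs k \<union> {(g ! k, u (g ! k))}" unfolding Gs_def PSuc[OF k] sel_insert by auto
    then show ?case using Suc k unfolding d_def by simp
  qed
  have SL: "S (length g) \<le> f G"
  proof -
    have "S (length g) \<le> (\<Sum>t<length g. d t)" unfolding S_def using dnn by (intro sum_mono) auto
    also have "\<dots> = f G" using c[of "length g"] unfolding Gs_def Pg G_def by simp
    finally show ?thesis .
  qed
  have S0: "0 \<le> S (length g)" unfolding S_def using dnn by (intro sum_nonneg) auto
  have e1: "f (G \<union> W) \<le> f G + S (length g)" using a[of "length g"] unfolding Pg W_def by simp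
  have e2: "f W + kap * S (length g) \<le> f (W \<union> G)" using b[of "length g"] unfolding Gs_def Pg G_def by simp
  have "f W \<le> f G + (1 - kap) * S (length g)" using e1 e2 by (simp add: Un_commute algebra_simps)
  also have "\<dots> \<le> f G + (1 - kap) * f G" using mult_left_mono[OF SL, of "1 - kap"] k1 by simp
  finally show ?thesis unfolding W_def G_def by (simp add: algebra_simps)
qed

end

lemma sum_dom:
  fixes p q :: "'a \<Rightarrow> real"
  assumes fA: "finite A" and fB: "finite B" and c: "card A \<le> card B"
    and dom: "\<And>x y. x \<in> A \<Longrightarrow> y \<in> B \<Longrightarrow> p x \<le> q y" and nn: "\<And>y. y \<in> B \<Longrightarrow> 0 \<le> q y"
  shows "(\<Sum>x\<in>A. p x) \<le> (\<Sum>y\<in>B. q y)"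
proof (cases "B = {}")
  case True
  hence "A = {}" using c fA fB by simp
  thus ?thesis using True by simp
next
  case False
  define m where "m = Min (q ` B)"
  have mB: "m \<le> q y" if "y \<in> B" for y unfolding m_def using fB that by simp
  have m0: "0 \<le> m" unfolding m_def using fB False nn by (simp add: Min_ge_iff)
  have pm: "p x \<le> m" if "x \<in> A" for x
  proof -
    have "m \<in> q ` B" unfolding m_def using fB False by simp
    then obtain y where "y \<in> B" "m = q y" by blast
    thus ?thesis using dom[OF that] by simp
  qed
  have "(\<Sum>x\<in>A. p x) \<le> (\<Sum>x\<in>A. m)" using pm by (intro sum_mono) auto
  also have "\<dots> = real (card A) * m" by simp
  also have "\<dots> \<le> real (card B) * m" using c m0 by (intro mult_right_mono) auto
  also have "\<dots> = (\<Sum>y\<in>B. m)" by simp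
  also have "\<dots> \<le> (\<Sum>y\<in>B. q y)" using mB by (intro sum_mono) auto
  finally show ?thesis .
qed

lemma Phi_att_ge:
  assumes "i < N"
  shows "phi (sel u (S \<inter> comp L i)) \<le> Phi_att phi N u S L"
  unfolding Phi_att_def using assms by (intro Max_ge) auto

lemma Phi_att_attained:
  assumes "1 \<le> N"
  shows "\<exists>i<N. Phi_att phi N u S L = phi (sel u (S \<inter> comp L i))"
proof -
  have "Phi_att phi N u S L \<in> (\<lambda>i. phi (sel u (S \<inter> comp L i))) ` {..<N}"
    unfolding Phi_att_def using assms by (intro Max_in) (auto simp: lessThan_empty_iff)
  thus ?thesis by auto
qed

lemma attack_set_finite:
  "finite {Phi_att phi N u ({..<N} - As) (edges N - Ac) | As Ac. feasible_attack N as ac As Ac}"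
proof -
  have "{Phi_att phi N u ({..<N} - As) (edges N - Ac) | As Ac. feasible_attack N as ac As Ac}
     \<subseteq> (\<lambda>(As, Ac). Phi_att phi N u ({..<N} - As) (edges N - Ac)) ` (Pow {..<N} \<times> Pow (edges N))"
    unfolding feasible_attack_def by auto
  moreover have "finite (Pow {..<N} \<times> Pow (edges N))" using finite_edges by simp
  ultimately show ?thesis using finite_subset by blast
qed

lemma worst_le:
  assumes "feasible_attack N as ac As Ac"
  shows "worst phi N as ac u \<le> Phi_att phi N u ({..<N} - As) (edges N - Ac)"
  unfolding worst_def using assms by (intro Min_le[OF attack_set_finite]) auto

lemma opt_attained:
  assumes "\<And>i. i < N \<Longrightarrow> finite (U i) \<and> U i \<noteq> {}"
  shows "\<exists>u'\<in>PiE {..<N} U. opt_value phi N U as ac = worst phi N as ac u'"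
proof -
  have "PiE {..<N} U \<noteq> {}" using assms by (simp add: PiE_eq_empty_iff)
  moreover have "finite (PiE {..<N} U)" using assms by (intro finite_PiE) auto
  ultimately have "opt_value phi N U as ac \<in> worst phi N as ac ` PiE {..<N} U"
    unfolding opt_value_def by (intro Max_in) auto
  thus ?thesis by auto
qed

lemma opt_wrap:
  fixes B :: real
  assumes U: "\<And>i. i < N \<Longrightarrow> finite (U i) \<and> U i \<noteq> {}" and N: "1 \<le> N"
    and feas: "feasible_attack N as ac As' Ac'" and B0: "0 \<le> B"
    and H: "\<And>u' i. u' \<in> PiE {..<N} U \<Longrightarrow> i < N \<Longrightarrow>
        B * phi (sel u' (({..<N} - As') \<inter> comp (edges N - Ac') i)) \<le> LHS"
  shows "B * opt_value phi N U as ac \<le> LHS"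
proof -
  obtain u' where u': "u' \<in> PiE {..<N} U" "opt_value phi N U as ac = worst phi N as ac u'"
    using opt_attained[where N=N and U=U and phi=phi and as=as and ac=ac, OF U] by blast
  obtain i where i: "i < N" "Phi_att phi N u' ({..<N} - As') (edges N - Ac')
      = phi (sel u' (({..<N} - As') \<inter> comp (edges N - Ac') i))"
    using Phi_att_attained[OF N] by blast
  have "opt_value phi N U as ac \<le> phi (sel u' (({..<N} - As') \<inter> comp (edges N - Ac') i))"
    using u'(2) worst_le[OF feas, of phi u'] i(2) by simp
  hence "B * opt_value phi N U as ac \<le> B * phi (sel u' (({..<N} - As') \<inter> comp (edges N - Ac') i))"
    using B0 by (simp add: mult_left_mono)
  also have "\<dots> \<le> LHS" using H[OF u'(1) i(1)] .
  finally show ?thesis .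
qed

lemma opt_zero:
  assumes U: "\<And>i. i < N \<Longrightarrow> finite (U i) \<and> U i \<noteq> {}" and N: "1 \<le> N"
    and Z: "\<And>u' S. u' \<in> PiE {..<N} U \<Longrightarrow> S \<subseteq> {..<N} \<Longrightarrow> phi (sel u' S) = 0"
  shows "opt_value phi N U as ac = 0"
proof -
  have PA: "Phi_att phi N u' S L = 0" if "u' \<in> PiE {..<N} U" "S \<subseteq> {..<N}" for u' S L
  proof -
    obtain i where "i < N" "Phi_att phi N u' S L = phi (sel u' (S \<inter> comp L i))"
      using Phi_att_attained[OF N] by blast
    moreover have "S \<inter> comp L i \<subseteq> {..<N}" using that(2) by auto
    ultimately show ?thesis using Z[OF that(1)] by simp
  qed
  have W: "worst phi N as ac u' = 0" if "u' \<in> PiE {..<N} U" for u'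
  proof -
    have "feasible_attack N as ac {} {}" unfolding feasible_attack_def by simp
    hence "{Phi_att phi N u' ({..<N} - As) (edges N - Ac) | As Ac. feasible_attack N as ac As Ac} = {0}"
      using PA[OF that] by auto
    thus ?thesis unfolding worst_def by simp
  qed
  obtain u' where u': "u' \<in> PiE {..<N} U" "opt_value phi N U as ac = worst phi N as ac u'"
    using opt_attained[where N=N and U=U and phi=phi and as=as and ac=ac, OF U] by blast
  thus ?thesis using W by simp
qed

lemma ratt_struct:
  assumes "ratt_output phi N U as ac u"
  obtains Vb g where "Vb \<subseteq> {..<N}"
    "\<And>i v. i \<in> Vb \<Longrightarrow> v \<in> U i \<Longrightarrow> phi {(i, v)} \<le> phi {(i, u i)}"
    "\<And>i. i \<in> Vb \<Longrightarrow> u i \<in> U i"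
    "\<And>i j v. i \<in> Vb \<Longrightarrow> j \<in> {..<N} - Vb \<Longrightarrow> v \<in> U j \<Longrightarrow> phi {(j, v)} \<le> phi {(i, u i)}"
    "distinct g" "set g = {..<N} - Vb"
    "\<And>k. k < length g \<Longrightarrow> u (g ! k) \<in> U (g ! k)"
    "\<And>k i' v. k < length g \<Longrightarrow> i' \<in> {..<N} - Vb - set (take k g) \<Longrightarrow> v \<in> U i' \<Longrightarrow>
        phi (sel u (set (take k g)) \<union> {(i', v)}) - phi (sel u (set (take k g)))
        \<le> phi (sel u (set (take k g)) \<union> {(g ! k, u (g ! k))}) - phi (sel u (set (take k g)))"
    "(as + caa N ac < N \<and> card Vb = as + caa N ac) \<or> (N \<le> as + caa N ac \<and> Vb = {..<N})"
proof (cases "as + caa N ac < N")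
  case True
  then obtain Vb g where
    "Vb \<subseteq> {..<N} \<and> card Vb = as + caa N ac \<and>
          (\<forall>i\<in>Vb. u i \<in> U i \<and> (\<forall>v\<in>U i. phi {(i, v)} \<le> phi {(i, u i)})) \<and>
          (\<forall>i\<in>Vb. \<forall>j\<in>{..<N} - Vb. \<forall>v\<in>U j. phi {(j, v)} \<le> phi {(i, u i)}) \<and>
          distinct g \<and> set g = {..<N} - Vb \<and>
          (\<forall>k<length g.
             u (g ! k) \<in> U (g ! k) \<and>
             (\<forall>i'\<in>{..<N} - Vb - set (take k g). \<forall>v\<in>U i'.
                phi (sel u (set (take k g)) \<union> {(i', v)}) - phi (sel u (set (take k g)))
                \<le> phi (sel u (set (take k g)) \<union> {(g ! k, u (g ! k))}) - phi (sel u (set (take k g)))))"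
    using assms unfolding ratt_output_def Let_def by auto
  then show ?thesis using that[of Vb g] True by auto
next
  case False
  hence A: "\<forall>i<N. u i \<in> U i \<and> (\<forall>v\<in>U i. phi {(i, v)} \<le> phi {(i, u i)})"
    using assms unfolding ratt_output_def Let_def by auto
  show ?thesis by (rule that[of "{..<N}" "[]"]) (use A False in auto)
qed

theorem theorem1:
  fixes phi :: "(nat \<times> 'u) set \<Rightarrow> real"
    and N :: nat and U :: "nat \<Rightarrow> 'u set"
    and as ac :: nat and u :: "nat \<Rightarrow> 'u"
    and As :: "nat set" and Ac :: "nat set set"
  assumes N: "1 \<le> N"
    and U: "\<And>i. i < N \<Longrightarrow> finite (U i) \<and> U i \<noteq> {}"
    and as_le: "as \<le> N" and ac_le: "ac \<le> N * (N - 1) div 2"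
    and ratt: "ratt_output phi N U as ac u"
    and feas: "feasible_attack N as ac As Ac"
    and argmin: "\<And>As' Ac'. feasible_attack N as ac As' Ac' \<Longrightarrow>
        Phi_att phi N u ({..<N} - As) (edges N - Ac) \<le> Phi_att phi N u ({..<N} - As') (edges N - Ac')"
    and mono: "nondecreasing_on (ground N U) phi"
    and norm: "normalized phi"
    and nonneg: "nonneg_on (ground N U) phi"
  shows "Phi_att phi N u ({..<N} - As) (edges N - Ac)
           \<ge> (let c = total_curvature (ground N U) phi; a = real (caa N ac) in
                if a = 0 then (1 - c) ^ 3 else min ((1 - c) ^ 3) ((1 - c) ^ 2 / a))
              * opt_value phi N U as ac
       \<and> ((submodular_on (ground N U) phi \<and> (\<forall>x\<in>ground N U. phi {x} \<noteq> 0)) \<longrightarrow>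
          Phi_att phi N u ({..<N} - As) (edges N - Ac)
           \<ge> (let k = curvature (ground N U) phi; a = real (caa N ac) in
                if a = 0 then (1 - k) / (1 + k) else min ((1 - k) / (1 + k)) ((1 - k) / a))
              * opt_value phi N U as ac)"
proof -
  define LHS where "LHS = Phi_att phi N u ({..<N} - As) (edges N - Ac)"
  define a where "a = caa N ac"
  define X where "X = ground N U"
  have norm0: "phi {} = 0" using norm unfolding normalized_def .
  obtain Vb g where st: "Vb \<subseteq> {..<N}"
    "\<And>i v. i \<in> Vb \<Longrightarrow> v \<in> U i \<Longrightarrow> phi {(i, v)} \<le> phi {(i, u i)}"
    "\<And>i. i \<in> Vb \<Longrightarrow> u i \<in> U i"
    "\<And>i j v. i \<in> Vb \<Longrightarrow> j \<in> {..<N} - Vb \<Longrightarrow> v \<in> U j \<Longrightarrow> phi {(j, v)} \<le> phi {(i, u i)}"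
    "distinct g" "set g = {..<N} - Vb"
    "\<And>k. k < length g \<Longrightarrow> u (g ! k) \<in> U (g ! k)"
    "\<And>k i' v. k < length g \<Longrightarrow> i' \<in> {..<N} - Vb - set (take k g) \<Longrightarrow> v \<in> U i' \<Longrightarrow>
        phi (sel u (set (take k g)) \<union> {(i', v)}) - phi (sel u (set (take k g)))
        \<le> phi (sel u (set (take k g)) \<union> {(g ! k, u (g ! k))}) - phi (sel u (set (take k g)))"
    "(as + caa N ac < N \<and> card Vb = as + caa N ac) \<or> (N \<le> as + caa N ac \<and> Vb = {..<N})"
    by (rule ratt_struct[OF ratt]) (rule that, assumption+)
  have st9: "(as + a < N \<and> card Vb = as + a) \<or> (N \<le> as + a \<and> Vb = {..<N})" using st(9) unfolding a_def .
  have uU: "u i \<in> U i" if "i < N" for i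
  proof (cases "i \<in> Vb")
    case True then show ?thesis using st(3) by blast
  next
    case False
    hence "i \<in> set g" using st(6) that by auto
    then obtain k where "k < length g" "i = g ! k" by (metis in_set_conv_nth)
    thus ?thesis using st(7) by blast
  qed
  interpret G: gsetup phi N U u Vb g
    by unfold_locales (use U mono norm0 uU st in auto)
  have finX: "finite X" unfolding X_def by (rule G.finX)
  have feasD: "As \<subseteq> {..<N}" "card As \<le> as" "Ac \<subseteq> edges N" "card Ac \<le> ac"
    using feas unfolding feasible_attack_def by auto
  have monoX: "A \<subseteq> B \<Longrightarrow> B \<subseteq> X \<Longrightarrow> phi A \<le> phi B" for A B
    using mono unfolding X_def by (rule mono_onD)
  have nnX: "A \<subseteq> X \<Longrightarrow> 0 \<le> phi A" for A using nonneg unfolding X_def nonneg_on_def by blast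
  have selX: "K \<subseteq> {..<N} \<Longrightarrow> (\<And>i. i < N \<Longrightarrow> u' i \<in> U i) \<Longrightarrow> sel u' K \<subseteq> X" for K u'
    unfolding X_def by (rule G.selX)
  have LHS_single: "phi {(j, u j)} \<le> LHS" if "j < N" "j \<notin> As" for j
  proof -
    have "{(j, u j)} \<subseteq> sel u (({..<N} - As) \<inter> comp (edges N - Ac) j)"
      using that comp_self[of j] by (auto simp: mem_sel)
    moreover have "sel u (({..<N} - As) \<inter> comp (edges N - Ac) j) \<subseteq> X" by (rule selX) (use uU in auto)
    ultimately have "phi {(j, u j)} \<le> phi (sel u (({..<N} - As) \<inter> comp (edges N - Ac) j))" by (rule monoX)
    also have "\<dots> \<le> LHS" unfolding LHS_def using that(1) by (rule Phi_att_ge)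
    finally show ?thesis .
  qed
  have LHS0: "0 \<le> LHS"
  proof -
    have "0 \<le> phi (sel u (({..<N} - As) \<inter> comp (edges N - Ac) 0))" by (intro nnX selX) (use uU in auto)
    also have "\<dots> \<le> LHS" unfolding LHS_def using N by (intro Phi_att_ge) auto
    finally show ?thesis .
  qed
  have PiE_U: "u' \<in> PiE {..<N} U \<Longrightarrow> i < N \<Longrightarrow> u' i \<in> U i" for u' i by auto
  \<comment> \<open>Attack used to bound the optimum\<close>
  obtain As' Ac' where feas': "feasible_attack N as ac As' Ac'" and
    shape: "\<And>i. i < N \<Longrightarrow> ({..<N} - As') \<inter> comp (edges N - Ac') i \<subseteq> set g \<or>
        (({..<N} - As') \<inter> comp (edges N - Ac') i \<subseteq> Vb - As \<and> card (({..<N} - As') \<inter> comp (edges N - Ac') i) \<le> a)"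
  proof (cases "as + a < N")
    case True
    hence cVb: "card Vb = as + a" using st9 by auto
    have finVb: "finite Vb" using st(1) finite_subset by blast
    have "card (As \<inter> Vb) \<le> as" using feasD(2) card_mono[OF finite_subset[OF feasD(1)], of "As \<inter> Vb"] by auto
    moreover have "as \<le> card Vb" using cVb by simp
    ultimately obtain As' where As': "As \<inter> Vb \<subseteq> As'" "As' \<subseteq> Vb" "card As' = as"
      using exists_subset_between[of "As \<inter> Vb" as Vb] finVb by auto
    define B' where "B' = Vb - As'"
    define P0 where "P0 = {..<N} - B'"
    define Ac' where "Ac' = (\<lambda>(i, j). {i, j}) ` (P0 \<times> B')"
    have cB': "card B' = a" unfolding B'_def using As' cVb finVb by (simp add: card_Diff_subset finite_subset)
    have B'V: "B' \<subseteq> {..<N}" unfolding B'_def using st(1) by auto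
    have cP0: "card P0 = N - a" unfolding P0_def using cB' B'V by (simp add: card_Diff_subset finite_subset)
    have "card Ac' \<le> card (P0 \<times> B')" unfolding Ac'_def by (rule card_image_le) (use B'V in \<open>auto simp: P0_def intro: finite_subset\<close>)
    also have "\<dots> = (N - a) * a" using cP0 cB' by (simp add: card_cartesian_product)
    also have "\<dots> \<le> ac" unfolding a_def using cut_budget[OF N ac_le] .
    finally have cAc': "card Ac' \<le> ac" .
    have Ac'E: "Ac' \<subseteq> edges N" unfolding Ac'_def edges_def P0_def using B'V by auto
    have feas': "feasible_attack N as ac As' Ac'"
      unfolding feasible_attack_def using As' st(1) cAc' Ac'E by auto
    have edgeN: "y < N" if "{x, y} \<in> edges N - Ac'" for x y using that unfolding edges_eq by auto
    have sideP: "comp (edges N - Ac') i \<subseteq> P0" if "i \<in> P0" for i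
    proof -
      have "comp (edges N - Ac') i \<subseteq> {j. j \<in> P0}"
      proof (rule comp_inv)
        fix x y assume xy: "{x, y} \<in> edges N - Ac'" "x \<in> P0"
        have "y \<notin> B'"
        proof
          assume "y \<in> B'"
          hence "{x, y} \<in> Ac'" unfolding Ac'_def using xy(2) by force
          thus False using xy(1) by simp
        qed
        thus "y \<in> P0" unfolding P0_def using edgeN[OF xy(1)] by simp
      qed (use that in auto)
      thus ?thesis by auto
    qed
    have sideB: "comp (edges N - Ac') i \<subseteq> B'" if "i \<in> B'" for i
    proof -
      have "comp (edges N - Ac') i \<subseteq> {j. j \<in> B'}"
      proof (rule comp_inv)
        fix x y assume xy: "{x, y} \<in> edges N - Ac'" "x \<in> B'"
        have "y \<notin> P0"
        proof
          assume "y \<in> P0"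
          hence "{y, x} \<in> Ac'" unfolding Ac'_def using xy(2) by force
          thus False using xy(1) by (simp add: insert_commute)
        qed
        thus "y \<in> B'" unfolding P0_def using edgeN[OF xy(1)] by simp
      qed (use that in auto)
      thus ?thesis by auto
    qed
    show ?thesis
    proof (rule that[OF feas'])
      fix i assume i: "i < N"
      show "({..<N} - As') \<inter> comp (edges N - Ac') i \<subseteq> set g \<or>
        (({..<N} - As') \<inter> comp (edges N - Ac') i \<subseteq> Vb - As \<and> card (({..<N} - As') \<inter> comp (edges N - Ac') i) \<le> a)"
      proof (cases "i \<in> B'")
        case True
        have s: "({..<N} - As') \<inter> comp (edges N - Ac') i \<subseteq> B'" using sideB[OF True] by auto
        have "B' \<subseteq> Vb - As" unfolding B'_def using As' by auto
        moreover have "card (({..<N} - As') \<inter> comp (edges N - Ac') i) \<le> card B'"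
          using s B'V by (intro card_mono) (auto intro: finite_subset)
        ultimately show ?thesis using s cB' by auto
      next
        case False
        hence "i \<in> P0" unfolding P0_def using i by auto
        hence "({..<N} - As') \<inter> comp (edges N - Ac') i \<subseteq> P0 - As'" using sideP by auto
        also have "\<dots> \<subseteq> set g" unfolding P0_def B'_def st(6) by auto
        finally show ?thesis by simp
      qed
    qed
  next
    case False
    hence Vb: "Vb = {..<N}" using st9 by auto
    obtain As' where As': "As \<subseteq> As'" "As' \<subseteq> {..<N}" "card As' = as"
      using exists_subset_between[of As as "{..<N}"] feasD as_le by auto
    have feas': "feasible_attack N as ac As' {}" unfolding feasible_attack_def using As' by auto
    show ?thesis
    proof (rule that[OF feas'])
      fix i assume i: "i < N"
      have s: "({..<N} - As') \<inter> comp (edges N - {}) i \<subseteq> {..<N} - As'" by auto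
      have "card ({..<N} - As') = N - as" using As' by (simp add: card_Diff_subset finite_subset)
      hence "card (({..<N} - As') \<inter> comp (edges N - {}) i) \<le> N - as"
        using card_mono[OF _ s] by simp
      moreover have "N - as \<le> a" using False by simp
      ultimately show "({..<N} - As') \<inter> comp (edges N - {}) i \<subseteq> set g \<or>
        (({..<N} - As') \<inter> comp (edges N - {}) i \<subseteq> Vb - As \<and> card (({..<N} - As') \<inter> comp (edges N - {}) i) \<le> a)"
        using s As' Vb by auto
    qed
  qed
  have Tfacts: "\<exists>K Sb A1. K \<inter> A1 = {} \<and> K \<union> A1 = set g \<and> Sb \<subseteq> Vb \<and> K \<inter> Sb = {} \<and> card A1 \<le> card Sb
      \<and> phi (sel u (K \<union> Sb)) \<le> LHS" if small: "as + a < N"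
  proof -
    have cVb: "card Vb = as + a" using st9 small by auto
    have finE: "finite (edges N)" by (rule finite_edges)
    have "card (edges N - Ac) = N * (N - 1) div 2 - card Ac"
      using card_Diff_subset[OF finite_subset[OF feasD(3) finE] feasD(3)] card_edges by simp
    hence cL: "N * (N - 1) div 2 - ac \<le> card (edges N - Ac)" using feasD(4) by simp
    obtain i where i: "i < N" "N - a \<le> card (comp (edges N - Ac) i)"
      using big_comp[OF N _ cL] unfolding a_def by auto
    define C where "C = comp (edges N - Ac) i"
    have CV: "C \<subseteq> {..<N}" unfolding C_def using comp_sub[of "edges N - Ac" N i] i by auto
    define T where "T = ({..<N} - As) \<inter> C"
    define K where "K = set g \<inter> T"
    define Sb where "Sb = Vb \<inter> T"
    define A1 where "A1 = set g - T"
    have TV: "T \<subseteq> {..<N}" unfolding T_def by auto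
    have KSb: "K \<union> Sb = T" unfolding K_def Sb_def using TV st(6) by auto
    have "{..<N} - T \<subseteq> As \<union> ({..<N} - C)" unfolding T_def by auto
    hence "card ({..<N} - T) \<le> card (As \<union> ({..<N} - C))"
      using feasD(1) by (intro card_mono) (auto intro: finite_subset)
    also have "\<dots> \<le> card As + card ({..<N} - C)" by (rule card_Un_le)
    also have "card ({..<N} - C) = N - card C" using CV by (simp add: card_Diff_subset finite_subset)
    finally have c1: "card ({..<N} - T) \<le> as + a" using feasD(2) i(2) unfolding C_def by linarith
    have "{..<N} - T = A1 \<union> (Vb - T)" unfolding A1_def using st(6) st(1) by auto
    moreover have "A1 \<inter> (Vb - T) = {}" unfolding A1_def using st(6) by auto
    moreover have finVb: "finite Vb" using st(1) finite_subset by blast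
    moreover have "finite A1" unfolding A1_def by simp
    ultimately have "card ({..<N} - T) = card A1 + card (Vb - T)"
      by (simp add: card_Un_disjoint)
    moreover have "card Vb = card Sb + card (Vb - T)"
    proof -
      have "Vb = Sb \<union> (Vb - T)" "Sb \<inter> (Vb - T) = {}" unfolding Sb_def by auto
      thus ?thesis using finVb card_Un_disjoint[of Sb "Vb - T"] by (metis finite_Un)
    qed
    ultimately have "card A1 \<le> card Sb" using c1 cVb by linarith
    moreover have "phi (sel u (K \<union> Sb)) \<le> LHS" unfolding KSb T_def C_def LHS_def using i(1) by (rule Phi_att_ge)
    moreover have "K \<inter> A1 = {}" "K \<union> A1 = set g" "Sb \<subseteq> Vb" "K \<inter> Sb = {}"
      unfolding K_def A1_def Sb_def using st(6) by auto
    ultimately show ?thesis by blast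
  qed
  have finVb: "finite Vb" using st(1) finite_subset by blast
  have single_nn: "0 \<le> phi {(i, v)}" if "i < N" "v \<in> U i" for i v
    using that by (intro nnX) (auto simp: X_def ground_def)
  have Ysum: "(\<Sum>j\<in>Z. phi {(j, u' j)}) \<le> real (card Z) * LHS"
    if u': "\<And>i. i < N \<Longrightarrow> u' i \<in> U i" and Z: "Z \<subseteq> Vb - As" for u' Z
  proof (rule sum_bounded_above)
    fix j assume j: "j \<in> Z"
    have jN: "j < N" "j \<in> Vb" "j \<notin> As" using j Z st(1) by auto
    have "phi {(j, u' j)} \<le> phi {(j, u j)}" using st(2)[OF jN(2) u'[OF jN(1)]] .
    also have "\<dots> \<le> LHS" using LHS_single jN by auto
    finally show "phi {(j, u' j)} \<le> LHS" .
  qed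
  have Sdom: "(\<Sum>j\<in>A1. phi {(j, u' j)}) \<le> (\<Sum>i\<in>Sb. phi {(i, u i)})"
    if u': "\<And>i. i < N \<Longrightarrow> u' i \<in> U i" and A1: "A1 \<subseteq> set g" and Sb: "Sb \<subseteq> Vb"
      and c: "card A1 \<le> card Sb" for u' A1 Sb
  proof (rule sum_dom)
    show "finite A1" using A1 finite_subset by blast
    show "finite Sb" using Sb finVb finite_subset by blast
    show "card A1 \<le> card Sb" by (rule c)
    fix x y assume "x \<in> A1" "y \<in> Sb"
    hence "y \<in> Vb" "x \<in> {..<N} - Vb" "u' x \<in> U x" using A1 Sb st(6) u' by auto
    thus "phi {(x, u' x)} \<le> phi {(y, u y)}" using st(4) by blast
  next
    fix y assume "y \<in> Sb"
    hence "y < N" using Sb st(1) by auto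
    thus "0 \<le> phi {(y, u y)}" using single_nn uU by blast
  qed
  have gV: "set g \<subseteq> {..<N}" using st(6) by auto
  have gempty: "set g = {}" if "\<not> as + a < N" using st9 that st(6) by auto
  have part1: "(if real a = 0 then (1 - total_curvature X phi) ^ 3
      else min ((1 - total_curvature X phi) ^ 3) ((1 - total_curvature X phi) ^ 2 / real a))
      * opt_value phi N U as ac \<le> LHS"
  proof (cases "\<exists>x Y'. x \<in> X \<and> Y' \<subseteq> X - {x} \<and> phi (Y' \<union> {x}) - phi Y' \<noteq> 0")
    case False
    have Z0: "S \<subseteq> X \<Longrightarrow> phi S = 0" for S
    proof -
      assume S: "S \<subseteq> X"
      hence "finite S" using finX finite_subset by blast
      thus ?thesis using S
      proof (induction S rule: finite_induct)
        case empty then show ?case using norm0 by simp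
      next
        case (insert x S)
        hence "x \<in> X" "S \<subseteq> X - {x}" by auto
        hence "phi (S \<union> {x}) - phi S = 0" using False by blast
        then show ?case using insert by simp
      qed
    qed
    have "opt_value phi N U as ac = 0"
    proof (rule opt_zero[OF U N])
      fix u' S assume a: "u' \<in> PiE {..<N} U" "S \<subseteq> {..<N}"
      have "sel u' S \<subseteq> X" by (rule selX[OF a(2)]) (use a(1) in auto)
      thus "phi (sel u' S) = 0" by (rule Z0)
    qed
    thus ?thesis using LHS0 by simp
  next
    case True
    define cb where "cb = 1 - total_curvature X phi"
    have cb0: "0 \<le> cb" and cb1: "cb \<le> 1" unfolding cb_def using tc_range[OF finX _ True] mono
      unfolding X_def by auto
    have P: "cb * (phi (Y' \<union> {x}) - phi Y') \<le> phi (Y \<union> {x}) - phi Y"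
      if "x \<in> X" "Y \<subseteq> X - {x}" "Y' \<subseteq> X - {x}" for x Y Y'
      unfolding cb_def using tc[OF finX _ that] mono unfolding X_def by auto
    have Qc: "cb * phi {x} \<le> phi (Y \<union> {x}) - phi Y" if "x \<in> X" "Y \<subseteq> X - {x}" for x Y
      using P[OF that(1) that(2), of "{}"] norm0 by simp
    have Rc: "cb * (phi (Y \<union> {x}) - phi Y) \<le> phi {x}" if "x \<in> X" "Y \<subseteq> X - {x}" for x Y
      using P[OF that(1) _ that(2), of "{}"] norm0 by simp
    have Yb: "cb * phi (sel u' Z) \<le> real a * LHS"
      if u': "\<And>i. i < N \<Longrightarrow> u' i \<in> U i" and Z: "Z \<subseteq> Vb - As" "card Z \<le> a" for u' Z
    proof -
      have fZ: "finite Z" using Z finVb finite_subset by blast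
      have "cb * (phi ({} \<union> sel u' Z) - phi {}) \<le> (\<Sum>x\<in>sel u' Z. phi {x})"
        by (rule acc_upper[where X=X, OF finite_sel[OF fZ] Rc]) (use selX[OF _ u'] Z st(1) in auto)
      hence "cb * phi (sel u' Z) \<le> (\<Sum>j\<in>Z. phi {(j, u' j)})" using norm0 by (simp add: sum_sel)
      also have "\<dots> \<le> real (card Z) * LHS" using Ysum[OF u' Z(1)] .
      also have "\<dots> \<le> real a * LHS" using Z(2) LHS0 by (intro mult_right_mono) auto
      finally show ?thesis .
    qed
    have Xb: "cb ^ 3 * phi (sel u' (set g)) \<le> LHS" if u': "\<And>i. i < N \<Longrightarrow> u' i \<in> U i" for u'
    proof (cases "as + a < N")
      case False
      thus ?thesis using gempty norm0 LHS0 by simp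
    next
      case True
      obtain K Sb A1 where T: "K \<inter> A1 = {}" "K \<union> A1 = set g" "Sb \<subseteq> Vb" "K \<inter> Sb = {}"
        "card A1 \<le> card Sb" "phi (sel u (K \<union> Sb)) \<le> LHS" using Tfacts[OF True] by blast
      have KV: "K \<subseteq> {..<N}" "A1 \<subseteq> {..<N}" "Sb \<subseteq> {..<N}" using T gV st(1) by auto
      have fin: "finite K" "finite A1" "finite Sb" using KV by (auto intro: finite_subset)
      have XK': "sel u' K \<subseteq> X" "sel u' A1 \<subseteq> X" using selX[OF KV(1) u'] selX[OF KV(2) u'] by auto
      have XK: "sel u K \<subseteq> X" "sel u Sb \<subseteq> X" using selX[OF KV(1)] selX[OF KV(3)] uU by auto
      define F where "F = phi (sel u' (set g))"
      define FK' where "FK' = phi (sel u' K)"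
      define S' where "S' = (\<Sum>j\<in>A1. phi {(j, u' j)})"
      define GK where "GK = phi (sel u K)"
      define Sbs where "Sbs = (\<Sum>i\<in>Sb. phi {(i, u i)})"
      define GS where "GS = phi (sel u Sb)"
      define R where "R = phi (sel u K \<union> sel u Sb)"
      have e1: "cb * (F - FK') \<le> S'"
      proof -
        have "cb * (phi (sel u' K \<union> sel u' A1) - phi (sel u' K)) \<le> (\<Sum>x\<in>sel u' A1. phi {x})"
          by (rule acc_upper[where X=X, OF finite_sel[OF fin(2)] Rc]) (use XK' T(1) in \<open>auto simp: mem_sel\<close>)
        thus ?thesis unfolding F_def FK'_def S'_def using T(2) by (simp add: sum_sel sel_Un[symmetric])
      qed
      have e2: "cb ^ 2 * FK' \<le> GK" unfolding FK'_def GK_def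
        by (rule G.greedy1[OF P cb0 u']) (use T(2) in \<open>auto simp: X_def\<close>)
      have e3: "S' \<le> Sbs" unfolding S'_def Sbs_def
        by (rule Sdom[OF u']) (use T in auto)
      have e4: "cb * GS \<le> R - GK" unfolding GS_def R_def GK_def
        by (rule acc_tc[where X=X, OF finite_sel[OF fin(3)] P]) (use XK T(4) norm0 in \<open>auto simp: mem_sel\<close>)
      have e5: "cb * Sbs \<le> GS"
      proof -
        have "cb * (\<Sum>x\<in>sel u Sb. phi {x}) \<le> phi ({} \<union> sel u Sb) - phi {}"
          by (rule acc_lower[where X=X, OF finite_sel[OF fin(3)] Qc]) (use XK in auto)
        thus ?thesis unfolding Sbs_def GS_def using norm0 by (simp add: sum_sel)
      qed
      have e6: "R \<le> LHS" unfolding R_def using T(6) by (simp add: sel_Un)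
      have GK0: "0 \<le> GK" unfolding GK_def using XK by (intro nnX) auto
      have s1: "cb ^ 2 * (cb * (F - FK')) \<le> cb ^ 2 * S'" using e1 cb0 by (intro mult_left_mono) auto
      have s2: "cb * (cb ^ 2 * FK') \<le> cb * GK" using e2 cb0 by (intro mult_left_mono) auto
      have s3: "cb * GK \<le> GK" using GK0 cb1 cb0 by (simp add: mult_left_le_one_le)
      have s4: "cb ^ 2 * S' \<le> cb ^ 2 * Sbs" using e3 cb0 by (intro mult_left_mono) auto
      have s5: "cb * (cb * Sbs) \<le> cb * GS" using e5 cb0 by (intro mult_left_mono) auto
      have eq1: "cb ^ 2 * (cb * (F - FK')) = cb ^ 3 * F - cb * (cb ^ 2 * FK')"
        by (simp add: algebra_simps power2_eq_square power3_eq_cube)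
      have eq2: "cb * (cb * Sbs) = cb ^ 2 * Sbs" by (simp add: power2_eq_square)
      have "cb ^ 3 * F \<le> R" using s1 s2 s3 s4 s5 e4 eq1 eq2 by linarith
      thus ?thesis using e6 unfolding F_def by simp
    qed
    define b where "b = (if real a = 0 then cb ^ 3 else min (cb ^ 3) (cb ^ 2 / real a))"
    have b0: "0 \<le> b" unfolding b_def using cb0 by auto
    have b3: "b \<le> cb ^ 3" unfolding b_def by auto
    have ba: "b \<le> cb / real a" if "a \<noteq> 0"
    proof -
      have "b \<le> cb ^ 2 / real a" unfolding b_def using that by auto
      also have "\<dots> \<le> cb / real a" using cb0 cb1 by (intro divide_right_mono) (auto simp: power2_eq_square mult_left_le_one_le)
      finally show ?thesis .
    qed
    have "b * opt_value phi N U as ac \<le> LHS"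
    proof (rule opt_wrap[OF U N feas' b0])
      fix u' i assume u'P: "u' \<in> PiE {..<N} U" and i: "i < N"
      have u': "\<And>i. i < N \<Longrightarrow> u' i \<in> U i" using u'P by auto
      define Z where "Z = ({..<N} - As') \<inter> comp (edges N - Ac') i"
      have ZV: "Z \<subseteq> {..<N}" unfolding Z_def by auto
      have v0: "0 \<le> phi (sel u' Z)" using selX[OF ZV u'] by (intro nnX)
      show "b * phi (sel u' Z) \<le> LHS"
      proof (cases "Z \<subseteq> set g")
        case True
        have "phi (sel u' Z) \<le> phi (sel u' (set g))" using True selX[OF gV u'] by (intro monoX sel_mono)
        hence "b * phi (sel u' Z) \<le> b * phi (sel u' (set g))" using b0 by (intro mult_left_mono)
        also have "\<dots> \<le> cb ^ 3 * phi (sel u' (set g))" using b3 selX[OF gV u'] by (intro mult_right_mono nnX)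
        also have "\<dots> \<le> LHS" by (rule Xb[OF u'])
        finally show ?thesis .
      next
        case False
        hence Z: "Z \<subseteq> Vb - As" "card Z \<le> a" using shape[OF i] unfolding Z_def by auto
        show ?thesis
        proof (cases "a = 0")
          case True
          have "finite Z" using ZV finite_subset by blast
          hence "Z = {}" using Z True by simp
          thus ?thesis using norm0 LHS0 by simp
        next
          case False
          have "b * phi (sel u' Z) \<le> (cb / real a) * phi (sel u' Z)" using ba[OF False] v0 by (intro mult_right_mono)
          also have "\<dots> = (cb * phi (sel u' Z)) / real a" by simp
          also have "\<dots> \<le> (real a * LHS) / real a" using Yb[OF u' Z] by (intro divide_right_mono) auto
          also have "\<dots> = LHS" using False by simp
          finally show ?thesis .
        qed
      qed
    qed
    thus ?thesis unfolding b_def cb_def .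
  qed
  have part2: "(if real a = 0 then (1 - curvature X phi) / (1 + curvature X phi)
      else min ((1 - curvature X phi) / (1 + curvature X phi)) ((1 - curvature X phi) / real a))
      * opt_value phi N U as ac \<le> LHS" if sm: "submodular_on X phi" and nz: "\<forall>x\<in>X. phi {x} \<noteq> 0"
  proof -
    define kap where "kap = 1 - curvature X phi"
    have kapM: "kap = Min ((\<lambda>x. (phi X - phi (X - {x})) / phi {x}) ` X)"
      unfolding kap_def curvature_def by simp
    obtain v0 where "v0 \<in> U 0" using U N by fastforce
    hence "(0, v0) \<in> X" unfolding X_def ground_def using N by auto
    hence Xne: "X \<noteq> {}" by blast
    have pos: "0 < phi {x}" if "x \<in> X" for x using nnX[of "{x}"] nz that by force
    have subm: "phi (B \<union> {x}) - phi B \<le> phi (A \<union> {x}) - phi A" if "A \<subseteq> B" "B \<subseteq> X" "x \<in> X" for A B x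
      using sm that unfolding submodular_on_def by blast
    have XX: "(X - {x}) \<union> {x} = X" if "x \<in> X" for x using that by auto
    have K1: "kap * phi {x} \<le> phi X - phi (X - {x})" if x: "x \<in> X" for x
    proof -
      have "kap \<le> (phi X - phi (X - {x})) / phi {x}" unfolding kapM using finX x by simp
      thus ?thesis using pos[OF x] by (simp add: pos_le_divide_eq)
    qed
    have kap0: "0 \<le> kap"
    proof -
      have "\<forall>r\<in>(\<lambda>x. (phi X - phi (X - {x})) / phi {x}) ` X. 0 \<le> r"
      proof
        fix r assume "r \<in> (\<lambda>x. (phi X - phi (X - {x})) / phi {x}) ` X"
        then obtain x where x: "x \<in> X" "r = (phi X - phi (X - {x})) / phi {x}" by blast
        have "phi (X - {x}) \<le> phi X" by (rule monoX) auto
        thus "0 \<le> r" using x pos[OF x(1)] by simp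
      qed
      thus ?thesis unfolding kapM using finX Xne by (simp add: Min_ge_iff)
    qed
    have kap1: "kap \<le> 1"
    proof -
      obtain x where x: "x \<in> X" using Xne by blast
      have "phi ((X - {x}) \<union> {x}) - phi (X - {x}) \<le> phi ({} \<union> {x}) - phi {}" by (rule subm) (use x in auto)
      hence "phi X - phi (X - {x}) \<le> phi {x}" using XX[OF x] norm0 by simp
      moreover have "kap * phi {x} \<le> phi X - phi (X - {x})" by (rule K1[OF x])
      ultimately have "kap * phi {x} \<le> 1 * phi {x}" by simp
      thus ?thesis using pos[OF x] by (simp add: mult_le_cancel_right)
    qed
    have Q: "kap * phi {x} \<le> phi (Y \<union> {x}) - phi Y" if "x \<in> X" "Y \<subseteq> X - {x}" for x Y
    proof -
      have "phi ((X - {x}) \<union> {x}) - phi (X - {x}) \<le> phi (Y \<union> {x}) - phi Y" by (rule subm) (use that in auto)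
      thus ?thesis using K1[OF that(1)] XX[OF that(1)] by simp
    qed
    have R1: "1 * (phi (Y \<union> {x}) - phi Y) \<le> phi {x}" if "x \<in> X" "Y \<subseteq> X - {x}" for x Y
      using subm[of "{}" Y x] that norm0 by auto
    have Xb: "kap * phi (sel u (set g)) \<le> LHS"
    proof (cases "as + a < N")
      case False
      thus ?thesis using gempty norm0 LHS0 by simp
    next
      case True
      obtain K Sb A1 where T: "K \<inter> A1 = {}" "K \<union> A1 = set g" "Sb \<subseteq> Vb" "K \<inter> Sb = {}"
        "card A1 \<le> card Sb" "phi (sel u (K \<union> Sb)) \<le> LHS" using Tfacts[OF True] by blast
      have KV: "K \<subseteq> {..<N}" "A1 \<subseteq> {..<N}" "Sb \<subseteq> {..<N}" using T gV st(1) by auto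
      have fin: "finite K" "finite A1" "finite Sb" using KV by (auto intro: finite_subset)
      have XK: "sel u K \<subseteq> X" "sel u Sb \<subseteq> X" "sel u A1 \<subseteq> X" using selX[OF KV(1)] selX[OF KV(3)] selX[OF KV(2)] uU by auto
      define G where "G = phi (sel u (set g))"
      define GK where "GK = phi (sel u K)"
      define S' where "S' = (\<Sum>j\<in>A1. phi {(j, u j)})"
      define Sbs where "Sbs = (\<Sum>i\<in>Sb. phi {(i, u i)})"
      define R where "R = phi (sel u K \<union> sel u Sb)"
      have e1: "G - GK \<le> S'"
      proof -
        have "1 * (phi (sel u K \<union> sel u A1) - phi (sel u K)) \<le> (\<Sum>x\<in>sel u A1. phi {x})"
          by (rule acc_upper[where X=X, OF finite_sel[OF fin(2)] R1]) (use XK T(1) in \<open>auto simp: mem_sel\<close>)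
        thus ?thesis unfolding G_def GK_def S'_def using T(2) by (simp add: sum_sel sel_Un[symmetric])
      qed
      have e3: "S' \<le> Sbs" unfolding S'_def Sbs_def by (rule Sdom[OF uU]) (use T in auto)
      have e4: "kap * Sbs \<le> R - GK"
      proof -
        have "kap * (\<Sum>x\<in>sel u Sb. phi {x}) \<le> phi (sel u K \<union> sel u Sb) - phi (sel u K)"
          by (rule acc_lower[where X=X, OF finite_sel[OF fin(3)] Q]) (use XK T(4) in \<open>auto simp: mem_sel\<close>)
        thus ?thesis unfolding Sbs_def R_def GK_def by (simp add: sum_sel)
      qed
      have e6: "R \<le> LHS" unfolding R_def using T(6) by (simp add: sel_Un)
      have GK0: "0 \<le> GK" unfolding GK_def using XK by (intro nnX) auto
      have s1: "kap * (G - GK) \<le> kap * S'" using e1 kap0 by (intro mult_left_mono) auto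
      have s2: "kap * S' \<le> kap * Sbs" using e3 kap0 by (intro mult_left_mono) auto
      have s3: "kap * GK \<le> GK" using GK0 kap1 kap0 by (simp add: mult_left_le_one_le)
      have "kap * G \<le> R" using s1 s2 s3 e4 by (simp add: algebra_simps)
      thus ?thesis using e6 unfolding G_def by simp
    qed
    have k2: "1 + curvature X phi = 2 - kap" unfolding kap_def by simp
    define b where "b = (if real a = 0 then kap / (2 - kap) else min (kap / (2 - kap)) (kap / real a))"
    have b0: "0 \<le> b" unfolding b_def using kap0 kap1 by auto
    have bX: "b \<le> kap / (2 - kap)" unfolding b_def by auto
    have ba: "b \<le> 1 / real a" if "a \<noteq> 0"
    proof -
      have "b \<le> kap / real a" unfolding b_def using that by auto
      also have "\<dots> \<le> 1 / real a" using kap1 by (intro divide_right_mono) auto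
      finally show ?thesis .
    qed
    have "b * opt_value phi N U as ac \<le> LHS"
    proof (rule opt_wrap[OF U N feas' b0])
      fix u' i assume u'P: "u' \<in> PiE {..<N} U" and i: "i < N"
      have u': "\<And>i. i < N \<Longrightarrow> u' i \<in> U i" using u'P by auto
      define Z where "Z = ({..<N} - As') \<inter> comp (edges N - Ac') i"
      have ZV: "Z \<subseteq> {..<N}" unfolding Z_def by auto
      have v0: "0 \<le> phi (sel u' Z)" using selX[OF ZV u'] by (intro nnX)
      show "b * phi (sel u' Z) \<le> LHS"
      proof (cases "Z \<subseteq> set g")
        case True
        have G0: "0 \<le> phi (sel u (set g))" using selX[OF gV uU] by (intro nnX) auto
        have "phi (sel u' Z) \<le> phi (sel u' (set g))" using True selX[OF gV u'] by (intro monoX sel_mono)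
        also have "\<dots> \<le> (2 - kap) * phi (sel u (set g))"
          by (rule G.greedy2[OF _ Q kap0 kap1 u']) (use sm in \<open>auto simp: X_def\<close>)
        finally have "b * phi (sel u' Z) \<le> b * ((2 - kap) * phi (sel u (set g)))" using b0 by (intro mult_left_mono)
        also have "\<dots> \<le> (kap / (2 - kap)) * ((2 - kap) * phi (sel u (set g)))"
          using bX G0 kap1 by (intro mult_right_mono) auto
        also have "\<dots> = kap * phi (sel u (set g))" using kap1 by simp
        also have "\<dots> \<le> LHS" by (rule Xb)
        finally show ?thesis .
      next
        case False
        hence Z: "Z \<subseteq> Vb - As" "card Z \<le> a" using shape[OF i] unfolding Z_def by auto
        have fZ: "finite Z" using ZV finite_subset by blast
        have "1 * (phi ({} \<union> sel u' Z) - phi {}) \<le> (\<Sum>x\<in>sel u' Z. phi {x})"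
          by (rule acc_upper[where X=X, OF finite_sel[OF fZ] R1]) (use selX[OF ZV u'] in auto)
        hence "phi (sel u' Z) \<le> (\<Sum>j\<in>Z. phi {(j, u' j)})" using norm0 by (simp add: sum_sel)
        also have "\<dots> \<le> real (card Z) * LHS" using Ysum[OF u' Z(1)] .
        also have "\<dots> \<le> real a * LHS" using Z(2) LHS0 by (intro mult_right_mono) auto
        finally have Yv: "phi (sel u' Z) \<le> real a * LHS" .
        show ?thesis
        proof (cases "a = 0")
          case True
          hence "Z = {}" using Z fZ by simp
          thus ?thesis using norm0 LHS0 by simp
        next
          case False
          have "b * phi (sel u' Z) \<le> (1 / real a) * phi (sel u' Z)" using ba[OF False] v0 by (intro mult_right_mono)
          also have "\<dots> \<le> (1 / real a) * (real a * LHS)" using Yv by (intro mult_left_mono) auto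
          also have "\<dots> = LHS" using False by simp
          finally show ?thesis .
        qed
      qed
    qed
    thus ?thesis unfolding b_def k2 kap_def .
  qed
  show ?thesis using part1 part2 unfolding LHS_def X_def a_def Let_def by simp
qed

end
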